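(* Let $X$ be a fake weighted projective plane with weights $(\lambda_0,\lambda_1,\lambda_2)$ and suppose there is a one-step mutation from $X$ to a fake weighted projective plane $Y$; by relabelling, $Y$ has weights $(\lambda_1,\lambda_2,\lambda_0')$ with $\lambda_0'=(\lambda_1+\lambda_2)^2/\lambda_0$. Write $\lambda_i=c_ia_i^2$ ($i=0,1,2$) and $\lambda_0'=c_0'a_0'^2$ with $a_i,a_0',c_i,c_0'$ positive integers and $c_i,c_0'$ square-free. Then $c_0'=c_0$ and $$\frac{(\lambda_1+\lambda_2+\lambda_0')^2}{\lambda_1\lambda_2\lambda_0'}=\frac{(\lambda_0+\lambda_1+\lambda_2)^2}{\lambda_0\lambda_1\lambda_2}=\frac{m^2}{rk^2}$$ (with $m,k,r$ positive integers, $r$ square-free). Consequently $(a_0,a_1,a_2)$ and $(a_0',a_1,a_2)$ are both solutions of the same Diophantine equation $$mx_0x_1x_2=k\left(c_0x_0^2+c_1x_1^2+c_2x_2^2\right).$$ Moreover $\mathrm{mult}(X)=\mathrm{mult}(Y)$.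
   Context: Let $N\cong\mathbb{Z}^2$ be a lattice, $M=\mathrm{Hom}(N,\mathbb{Z})$ its dual, $N_\mathbb{Q}=N\otimes_\mathbb{Z}\mathbb{Q}$. A Fano polygon is a two-dimensional convex lattice polygon $P\subset N_\mathbb{Q}$ containing the origin in its interior whose vertices are primitive lattice points. For primitive $w\in M$ and $h\in\mathbb{Z}$ put $H_{w,h}=\{v\in N_\mathbb{Q}: w(v)=h\}$, $w_h(P)=\mathrm{conv}(H_{w,h}\cap P\cap N)$ (possibly empty), $h_{\min}=\min_{v\in P}w(v)$, $h_{\max}=\max_{v\in P}w(v)$. A factor of $P$ with respect to $w$ is a lattice polytope $F\subset N_\mathbb{Q}$ with $w(F)=\{0\}$ such that for each integer $h$ with $h_{\min}\le h<0$ there is a (possibly empty) lattice polytope $G_h\subset H_{w,h}$ with $H_{w,h}\cap \mathrm{V}(P)\subseteq G_h+(-h)F\subseteq w_h(P)$, where $\mathrm{V}(P)$ is the vertex set and $+$ is Minkowski sum. The (combinatorial) mutation is $\mathrm{mut}_w(P,F)=\mathrm{conv}\big(\bigcup_{h=h_{\min}}^{-1}G_h\cup\bigcup_{h=0}^{h_{\max}}(w_h(P)+hF)\big)$; up to automorphisms of $N$ it does not depend on the choice of the $G_h$, and it is again a Fano polygon. Polygons are isomorphic ($\cong$) if related by an automorphism of $N$. A Fano triangle $P=\mathrm{conv}(v_0,v_1,v_2)$ determines the toric surface $X_P$ whose fan consists of the cones over the faces of $P$; such a surface is a fake weighted projective plane. Its weights are the unique positive integers $\lambda_0,\lambda_1,\lambda_2$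 with $\gcd(\lambda_0,\lambda_1,\lambda_2)=1$ and $\lambda_0v_0+\lambda_1v_1+\lambda_2v_2=0$; they are pairwise coprime. $\mathrm{mult}(X_P)$ is the index $[N:\mathbb{Z}v_0+\mathbb{Z}v_1+\mathbb{Z}v_2]$. Known facts: $(\lambda_0+\lambda_1+\lambda_2)^2/(\lambda_0\lambda_1\lambda_2)=\mathrm{mult}(X)\,(-K_X)^2$, and the anticanonical degree $(-K_X)^2$ is preserved by mutation. A fake weighted projective plane $Y=X_Q$ is obtained from $X=X_P$ by a one-step mutation if $Q\cong\mathrm{mut}_w(P,F)$ for some primitive $w\in M$ and some factor $F$ of $P$ with respect to $w$. *)

theory Defs
  imports "HOL-Analysis.Analysis" "HOL-Computational_Algebra.Squarefree"
begin

text \<open>N = int x int, embedded into N_R = real x real (convex hulls of lattice points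
  taken over the reals; their lattice points coincide with those of the rational hulls).
  M = int x int acting by the standard pairing.\<close>

type_synonym pt = "real \<times> real"

definition lat :: "int \<times> int \<Rightarrow> pt" where
  "lat v = (of_int (fst v), of_int (snd v))"

definition lattice_pts :: "pt set" where
  "lattice_pts = range lat"

definition lattice_polytope :: "pt set \<Rightarrow> bool" where
  "lattice_polytope S \<longleftrightarrow> (\<exists>A. finite A \<and> A \<subseteq> lattice_pts \<and> S = convex hull A)"

definition primitive :: "int \<times> int \<Rightarrow> bool" where
  "primitive v \<longleftrightarrow> gcd (fst v) (snd v) = 1"

definition vertices :: "pt set \<Rightarrow> pt set" where
  "vertices P = {v. v extreme_point_of P}"

definition fano_polygon :: "pt set \<Rightarrow> bool" where
  "fano_polygon P \<longleftrightarrow> lattice_polytope P \<and> (0::pt) \<in> interior P \<and>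
     (\<forall>v \<in> vertices P. \<exists>z. primitive z \<and> v = lat z)"

definition pair :: "int \<times> int \<Rightarrow> pt \<Rightarrow> real" where
  "pair w v = of_int (fst w) * fst v + of_int (snd w) * snd v"

definition hyper :: "int \<times> int \<Rightarrow> int \<Rightarrow> pt set" where
  "hyper w h = {v. pair w v = of_int h}"

text \<open>w_h(P)\<close>
definition slice :: "int \<times> int \<Rightarrow> int \<Rightarrow> pt set \<Rightarrow> pt set" where
  "slice w h P = convex hull (hyper w h \<inter> P \<inter> lattice_pts)"

definition hmin :: "int \<times> int \<Rightarrow> pt set \<Rightarrow> real" where
  "hmin w P = Inf (pair w ` P)"

definition hmax :: "int \<times> int \<Rightarrow> pt set \<Rightarrow> real" where
  "hmax w P = Sup (pair w ` P)"

definition minkowski :: "pt set \<Rightarrow> pt set \<Rightarrow> pt set" where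
  "minkowski A B = {a + b | a b. a \<in> A \<and> b \<in> B}"

text \<open>F is a factor of P w.r.t. w, with witnessing polytopes G h (for hmin <= h < 0).\<close>
definition is_factor :: "int \<times> int \<Rightarrow> pt set \<Rightarrow> pt set \<Rightarrow> (int \<Rightarrow> pt set) \<Rightarrow> bool" where
  "is_factor w P F G \<longleftrightarrow> lattice_polytope F \<and> pair w ` F = {0} \<and>
     (\<forall>h::int. hmin w P \<le> of_int h \<and> h < 0 \<longrightarrow>
        lattice_polytope (G h) \<and> G h \<subseteq> hyper w h \<and>
        hyper w h \<inter> vertices P \<subseteq> minkowski (G h) (((*\<^sub>R) (of_int (- h))) ` F) \<and>
        minkowski (G h) (((*\<^sub>R) (of_int (- h))) ` F) \<subseteq> slice w h P)"

definition mutation :: "int \<times> int \<Rightarrow> pt set \<Rightarrow> pt set \<Rightarrow> (int \<Rightarrow> pt set) \<Rightarrow> pt set" where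
  "mutation w P F G = convex hull
     ((\<Union>h \<in> {h::int. hmin w P \<le> of_int h \<and> h < 0}. G h) \<union>
      (\<Union>h \<in> {h::int. 0 \<le> h \<and> of_int h \<le> hmax w P}. minkowski (slice w h P) (((*\<^sub>R) (of_int h)) ` F)))"

text \<open>Isomorphism: related by an automorphism of N (an integer matrix of determinant +-1).\<close>
definition iso :: "pt set \<Rightarrow> pt set \<Rightarrow> bool" where
  "iso P Q \<longleftrightarrow> (\<exists>a b c d :: int. \<bar>a * d - b * c\<bar> = 1 \<and>
     Q = (\<lambda>(x, y). (of_int a * x + of_int b * y, of_int c * x + of_int d * y)) ` P)"

definition one_step_mutation :: "pt set \<Rightarrow> pt set \<Rightarrow> bool" where
  "one_step_mutation P Q \<longleftrightarrow>
     (\<exists>w F G. primitive w \<and> is_factor w P F G \<and> iso Q (mutation w P F G))"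

definition triangle :: "int \<times> int \<Rightarrow> int \<times> int \<Rightarrow> int \<times> int \<Rightarrow> pt set" where
  "triangle v0 v1 v2 = convex hull {lat v0, lat v1, lat v2}"

text \<open>Weights of the fake weighted projective plane X_P, P = conv(v0,v1,v2).\<close>
definition fwpp_weights :: "int \<times> int \<Rightarrow> int \<times> int \<Rightarrow> int \<times> int \<Rightarrow> nat \<Rightarrow> nat \<Rightarrow> nat \<Rightarrow> bool" where
  "fwpp_weights v0 v1 v2 l0 l1 l2 \<longleftrightarrow> l0 > 0 \<and> l1 > 0 \<and> l2 > 0 \<and> gcd l0 (gcd l1 l2) = 1 \<and>
     int l0 * fst v0 + int l1 * fst v1 + int l2 * fst v2 = 0 \<and>
     int l0 * snd v0 + int l1 * snd v1 + int l2 * snd v2 = 0"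

definition sublattice :: "int \<times> int \<Rightarrow> int \<times> int \<Rightarrow> int \<times> int \<Rightarrow> (int \<times> int) set" where
  "sublattice v0 v1 v2 = {(a * fst v0 + b * fst v1 + c * fst v2, a * snd v0 + b * snd v1 + c * snd v2) | a b c. True}"

text \<open>mult(X_P) = index [N : Z v0 + Z v1 + Z v2] (number of cosets).\<close>
definition mult :: "int \<times> int \<Rightarrow> int \<times> int \<Rightarrow> int \<times> int \<Rightarrow> nat" where
  "mult v0 v1 v2 = card ((UNIV :: (int \<times> int) set) //
      {(x, y). (fst x - fst y, snd x - snd y) \<in> sublattice v0 v1 v2})"

definition deg_ratio :: "nat \<Rightarrow> nat \<Rightarrow> nat \<Rightarrow> rat" where
  "deg_ratio l0 l1 l2 = of_nat ((l0 + l1 + l2)^2) / of_nat (l0 * l1 * l2)"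

end

theory Submission
  imports Defs
begin

(* ---- base/A.thy ---- *)


definition bmap :: "int \<Rightarrow> int \<Rightarrow> int \<Rightarrow> int \<Rightarrow> int \<times> int \<Rightarrow> int \<times> int" where
  "bmap p q r s x = (p * fst x + q * snd x, r * fst x + s * snd x)"

lemma sublattice_mem: "x \<in> sublattice v0 v1 v2 \<longleftrightarrow>
  (\<exists>a b c. x = (a * fst v0 + b * fst v1 + c * fst v2, a * snd v0 + b * snd v1 + c * snd v2))"
  unfolding sublattice_def by auto

lemma sublattice_gen: "v0 \<in> sublattice v0 v1 v2" "v1 \<in> sublattice v0 v1 v2" "v2 \<in> sublattice v0 v1 v2"
  unfolding sublattice_mem
    apply (rule exI[of _ 1], rule exI[of _ 0], rule exI[of _ 0], simp)
   apply (rule exI[of _ 0], rule exI[of _ 1], rule exI[of _ 0], simp)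
  apply (rule exI[of _ 0], rule exI[of _ 0], rule exI[of _ 1], simp)
  done

lemma sublattice_subset:
  assumes "u0 \<in> sublattice v0 v1 v2" "u1 \<in> sublattice v0 v1 v2" "u2 \<in> sublattice v0 v1 v2"
  shows "sublattice u0 u1 u2 \<subseteq> sublattice v0 v1 v2"
proof
  fix x assume "x \<in> sublattice u0 u1 u2"
  then obtain a b c where x: "x = (a * fst u0 + b * fst u1 + c * fst u2, a * snd u0 + b * snd u1 + c * snd u2)"
    unfolding sublattice_mem by blast
  obtain a0 b0 c0 where 0: "u0 = (a0 * fst v0 + b0 * fst v1 + c0 * fst v2, a0 * snd v0 + b0 * snd v1 + c0 * snd v2)"
    using assms(1) unfolding sublattice_mem by blast
  obtain a1 b1 c1 where 1: "u1 = (a1 * fst v0 + b1 * fst v1 + c1 * fst v2, a1 * snd v0 + b1 * snd v1 + c1 * snd v2)"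
    using assms(2) unfolding sublattice_mem by blast
  obtain a2 b2 c2 where 2: "u2 = (a2 * fst v0 + b2 * fst v1 + c2 * fst v2, a2 * snd v0 + b2 * snd v1 + c2 * snd v2)"
    using assms(3) unfolding sublattice_mem by blast
  show "x \<in> sublattice v0 v1 v2"
    unfolding sublattice_mem
    apply (rule exI[of _ "a*a0+b*a1+c*a2"], rule exI[of _ "a*b0+b*b1+c*b2"], rule exI[of _ "a*c0+b*c1+c*c2"])
    by (simp add: x 0 1 2 algebra_simps)
qed

lemma sublattice_eqI:
  assumes "u0 \<in> sublattice v0 v1 v2" "u1 \<in> sublattice v0 v1 v2" "u2 \<in> sublattice v0 v1 v2"
    "v0 \<in> sublattice u0 u1 u2" "v1 \<in> sublattice u0 u1 u2" "v2 \<in> sublattice u0 u1 u2"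
  shows "sublattice u0 u1 u2 = sublattice v0 v1 v2"
  using sublattice_subset assms by blast

lemma mult_cong: "sublattice u0 u1 u2 = sublattice v0 v1 v2 \<Longrightarrow> mult u0 u1 u2 = mult v0 v1 v2"
  unfolding mult_def by simp

lemma sublattice_comb:
  assumes "x \<in> sublattice v0 v1 v2" "y \<in> sublattice v0 v1 v2"
  shows "(k * fst x + l * fst y, k * snd x + l * snd y) \<in> sublattice v0 v1 v2"
proof -
  obtain a b c where x: "x = (a * fst v0 + b * fst v1 + c * fst v2, a * snd v0 + b * snd v1 + c * snd v2)"
    using assms(1) unfolding sublattice_mem by blast
  obtain a' b' c' where y: "y = (a' * fst v0 + b' * fst v1 + c' * fst v2, a' * snd v0 + b' * snd v1 + c' * snd v2)"
    using assms(2) unfolding sublattice_mem by blast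
  show ?thesis unfolding sublattice_mem
    apply (rule exI[of _ "k*a+l*a'"], rule exI[of _ "k*b+l*b'"], rule exI[of _ "k*c+l*c'"])
    by (simp add: x y algebra_simps)
qed

lemma quotient_card_bij:
  fixes f :: "int \<times> int \<Rightarrow> int \<times> int"
  assumes bij: "bij f" and add: "\<And>x y. f (fst x - fst y, snd x - snd y) = (fst (f x) - fst (f y), snd (f x) - snd (f y))"
  shows "card (UNIV // {(x, y). (fst x - fst y, snd x - snd y) \<in> f ` L}) =
         card (UNIV // {(x, y). (fst x - fst y, snd x - snd y) \<in> L})"
proof -
  let ?r = "{(x, y). (fst x - fst y, snd x - snd y) \<in> L}"
  let ?r' = "{(x, y). (fst x - fst y, snd x - snd y) \<in> f ` L}"
  have inj: "inj f" using bij bij_is_inj by blast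
  have cls: "?r' `` {f x} = f ` (?r `` {x})" for x
  proof -
    have "y \<in> ?r' `` {f x} \<longleftrightarrow> y \<in> f ` (?r `` {x})" for y
    proof -
      obtain z where z: "y = f z" using bij by (metis bij_pointE)
      have "y \<in> ?r' `` {f x} \<longleftrightarrow> f (fst x - fst z, snd x - snd z) \<in> f ` L" using add z by simp
      also have "\<dots> \<longleftrightarrow> (fst x - fst z, snd x - snd z) \<in> L" using inj by (simp add: inj_image_mem_iff)
      also have "\<dots> \<longleftrightarrow> z \<in> ?r `` {x}" by simp
      also have "\<dots> \<longleftrightarrow> y \<in> f ` (?r `` {x})" using inj z by (simp add: inj_image_mem_iff)
      finally show ?thesis .
    qed
    then show ?thesis by blast
  qed
  have "UNIV // ?r' = (\<lambda>X. f ` X) ` (UNIV // ?r)"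
  proof
    show "UNIV // ?r' \<subseteq> (\<lambda>X. f ` X) ` (UNIV // ?r)"
    proof
      fix X assume "X \<in> UNIV // ?r'"
      then obtain y where y: "X = ?r' `` {y}" by (auto elim: quotientE)
      obtain x where "y = f x" using bij by (metis bij_pointE)
      then have "X = f ` (?r `` {x})" using y cls by simp
      moreover have "?r `` {x} \<in> UNIV // ?r" by (rule quotientI) simp
      ultimately show "X \<in> (\<lambda>X. f ` X) ` (UNIV // ?r)" by blast
    qed
  next
    show "(\<lambda>X. f ` X) ` (UNIV // ?r) \<subseteq> UNIV // ?r'"
    proof
      fix X assume "X \<in> (\<lambda>X. f ` X) ` (UNIV // ?r)"
      then obtain x where "X = f ` (?r `` {x})" by (auto elim: quotientE)
      then have "X = ?r' `` {f x}" using cls by simp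
      moreover have "?r' `` {f x} \<in> UNIV // ?r'" by (rule quotientI) simp
      ultimately show "X \<in> UNIV // ?r'" by simp
    qed
  qed
  moreover have "inj_on (\<lambda>X. f ` X) (UNIV // ?r)"
    using inj by (meson inj_image_eq_iff inj_onI)
  ultimately show ?thesis by (simp add: card_image)
qed

lemma bmap_sublattice: "sublattice (bmap p q r s v0) (bmap p q r s v1) (bmap p q r s v2) = bmap p q r s ` sublattice v0 v1 v2"
proof
  show "sublattice (bmap p q r s v0) (bmap p q r s v1) (bmap p q r s v2) \<subseteq> bmap p q r s ` sublattice v0 v1 v2"
  proof
    fix x assume "x \<in> sublattice (bmap p q r s v0) (bmap p q r s v1) (bmap p q r s v2)"
    then obtain a b c where x: "x = (a * fst (bmap p q r s v0) + b * fst (bmap p q r s v1) + c * fst (bmap p q r s v2),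
       a * snd (bmap p q r s v0) + b * snd (bmap p q r s v1) + c * snd (bmap p q r s v2))"
      unfolding sublattice_mem by blast
    let ?y = "(a * fst v0 + b * fst v1 + c * fst v2, a * snd v0 + b * snd v1 + c * snd v2)"
    have "?y \<in> sublattice v0 v1 v2" unfolding sublattice_mem by blast
    moreover have "x = bmap p q r s ?y" by (simp add: x bmap_def algebra_simps)
    ultimately show "x \<in> bmap p q r s ` sublattice v0 v1 v2" by blast
  qed
next
  show "bmap p q r s ` sublattice v0 v1 v2 \<subseteq> sublattice (bmap p q r s v0) (bmap p q r s v1) (bmap p q r s v2)"
  proof
    fix x assume "x \<in> bmap p q r s ` sublattice v0 v1 v2"
    then obtain y where y: "y \<in> sublattice v0 v1 v2" and xy: "x = bmap p q r s y" by blast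
    then obtain a b c where x: "x = bmap p q r s (a * fst v0 + b * fst v1 + c * fst v2, a * snd v0 + b * snd v1 + c * snd v2)"
      unfolding sublattice_mem by blast
    show "x \<in> sublattice (bmap p q r s v0) (bmap p q r s v1) (bmap p q r s v2)"
      unfolding sublattice_mem
      by (rule exI[of _ a], rule exI[of _ b], rule exI[of _ c]) (simp add: x bmap_def algebra_simps)
  qed
qed

lemma bmap_bij:
  assumes "\<bar>p * s - q * r\<bar> = 1"
  shows "bij (bmap p q r s)"
proof -
  define \<delta> where "\<delta> = p * s - q * r"
  have "\<delta> = 1 \<or> \<delta> = -1" using assms unfolding \<delta>_def by (auto simp: abs_if split: if_splits)
  then have d2: "\<delta> * \<delta> = 1" by auto
  let ?g = "bmap (\<delta> * s) (- \<delta> * q) (- \<delta> * r) (\<delta> * p)"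
  have 1: "bmap p q r s (?g x) = x" for x
  proof -
    have "bmap p q r s (?g x) = (\<delta> * \<delta> * fst x, \<delta> * \<delta> * snd x)"
      by (simp add: bmap_def \<delta>_def algebra_simps)
    then show ?thesis using d2 by simp
  qed
  have 2: "?g (bmap p q r s x) = x" for x
  proof -
    have "?g (bmap p q r s x) = (\<delta> * \<delta> * fst x, \<delta> * \<delta> * snd x)"
      by (simp add: bmap_def \<delta>_def algebra_simps)
    then show ?thesis using d2 by simp
  qed
  show ?thesis by (rule bijI'; metis 1 2)
qed

lemma mult_bmap:
  assumes "\<bar>p * s - q * r\<bar> = 1"
  shows "mult (bmap p q r s v0) (bmap p q r s v1) (bmap p q r s v2) = mult v0 v1 v2"
  unfolding mult_def bmap_sublattice
  by (rule quotient_card_bij[OF bmap_bij[OF assms]]) (simp add: bmap_def algebra_simps)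


(* ---- base/B.thy ---- *)


lemma sqf_eq_parity:
  fixes x y :: nat
  assumes "squarefree x" "squarefree y" "x \<noteq> 0" "y \<noteq> 0"
    and ev: "\<And>p. prime p \<Longrightarrow> even (multiplicity p x + multiplicity p y)"
  shows "x = y"
proof -
  have "multiplicity p x = multiplicity p y" if p: "prime p" for p
  proof -
    have "multiplicity p x \<le> 1" using assms(1,3) p squarefree_factorial_semiring'' by blast
    moreover have "multiplicity p y \<le> 1" using assms(2,4) p squarefree_factorial_semiring'' by blast
    moreover have "even (multiplicity p x + multiplicity p y)" using ev p by blast
    ultimately show ?thesis by presburger
  qed
  then have "normalize x = normalize y" using multiplicity_eq_imp_eq assms(3,4) by blast
  then show ?thesis by simp
qed

lemma mult_sq:
  fixes x B :: nat
  assumes "prime p" "B \<noteq> 0"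
  shows "multiplicity p (B^2) = 2 * multiplicity p B"
  using assms by (simp add: prime_elem_multiplicity_power_distrib)

lemma mult_prod:
  fixes x y :: nat
  assumes "prime p" "x \<noteq> 0" "y \<noteq> 0"
  shows "multiplicity p (x * y) = multiplicity p x + multiplicity p y"
  using assms by (simp add: prime_elem_multiplicity_mult_distrib)

lemma sqf_eq1:
  fixes x y B D :: nat
  assumes "squarefree x" "squarefree y" "x \<noteq> 0" "y \<noteq> 0" "B \<noteq> 0" "D \<noteq> 0"
    and eq: "x * B^2 = y * D^2"
  shows "x = y"
proof (rule sqf_eq_parity[OF assms(1-4)])
  fix p :: nat assume p: "prime p"
  have "multiplicity p (x * B^2) = multiplicity p (y * D^2)" using eq by simp
  moreover have "multiplicity p (x * B^2) = multiplicity p x + 2 * multiplicity p B"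
    using assms p mult_prod[of p x "B^2"] mult_sq[of p B] by simp
  moreover have "multiplicity p (y * D^2) = multiplicity p y + 2 * multiplicity p D"
    using assms p mult_prod[of p y "D^2"] mult_sq[of p D] by simp
  ultimately have "multiplicity p x + 2 * multiplicity p B = multiplicity p y + 2 * multiplicity p D"
    by simp
  then show "even (multiplicity p x + multiplicity p y)" by presburger
qed

lemma sqf_eq2:
  fixes x y A B :: nat
  assumes "squarefree x" "squarefree y" "x \<noteq> 0" "y \<noteq> 0" "A \<noteq> 0" "B \<noteq> 0"
    and eq: "x * y * A^2 = B^2"
  shows "x = y"
proof (rule sqf_eq_parity[OF assms(1-4)])
  fix p :: nat assume p: "prime p"
  have "multiplicity p (x * y * A^2) = multiplicity p (B^2)" using eq by simp
  moreover have "multiplicity p (x * y * A^2) = multiplicity p x + multiplicity p y + 2 * multiplicity p A"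
    using assms p mult_prod[of p "x*y" "A^2"] mult_prod[of p x y] mult_sq[of p A] by simp
  moreover have "multiplicity p (B^2) = 2 * multiplicity p B"
    using assms p mult_sq[of p B] by simp
  ultimately have "multiplicity p x + multiplicity p y + 2 * multiplicity p A = 2 * multiplicity p B"
    by simp
  then show "even (multiplicity p x + multiplicity p y)" by presburger
qed

lemma key_dioph:
  fixes C r S A m k :: nat
  assumes "squarefree C" "squarefree r" "C > 0" "r > 0" "k > 0" "A > 0" "S > 0" "m > 0"
    and eq: "S^2 * (r * k^2) = m^2 * (C * A^2)"
  shows "m * A = k * S"
proof -
  have "r * (S * k)^2 = C * (m * A)^2" using eq by (simp add: power_mult_distrib algebra_simps)
  then have rC: "r = C" using sqf_eq1[of r C "S*k" "m*A"] assms by simp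
  then have "C * (S * k)^2 = C * (m * A)^2" using eq by (simp add: power_mult_distrib algebra_simps)
  then have "(S * k)^2 = (m * A)^2" using assms(3) by simp
  then have "S * k = m * A" using power2_eq_iff_nonneg by blast
  then show ?thesis by (simp add: algebra_simps)
qed

lemma deg_ratio_eq:
  fixes a b c :: nat
  assumes "a > 0" "b > 0" "c > 0" "x > 0" "y > 0" "z > 0"
  shows "deg_ratio a b c = deg_ratio x y z \<longleftrightarrow> (a + b + c)^2 * (x * y * z) = (x + y + z)^2 * (a * b * c)"
proof -
  have "deg_ratio a b c = deg_ratio x y z \<longleftrightarrow>
    (of_nat ((a + b + c)^2) :: rat) * of_nat (x * y * z) = of_nat ((x + y + z)^2) * of_nat (a * b * c)"
    unfolding deg_ratio_def
    by (rule frac_eq_eq) (use assms in simp_all)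
  also have "\<dots> \<longleftrightarrow> (a + b + c)^2 * (x * y * z) = (x + y + z)^2 * (a * b * c)"
    by (simp only: of_nat_mult[symmetric] of_nat_eq_iff)
  finally show ?thesis .
qed

lemma deg_ratio_eq2:
  fixes a b c :: nat
  assumes "a > 0" "b > 0" "c > 0" "r > 0" "k > 0"
  shows "deg_ratio a b c = of_nat (m^2) / of_nat (r * k^2) \<longleftrightarrow> (a + b + c)^2 * (r * k^2) = m^2 * (a * b * c)"
proof -
  have "deg_ratio a b c = of_nat (m^2) / of_nat (r * k^2) \<longleftrightarrow>
    (of_nat ((a + b + c)^2) :: rat) * of_nat (r * k^2) = of_nat (m^2) * of_nat (a * b * c)"
    unfolding deg_ratio_def
    by (rule frac_eq_eq) (use assms in simp_all)
  also have "\<dots> \<longleftrightarrow> (a + b + c)^2 * (r * k^2) = m^2 * (a * b * c)"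
    by (simp only: of_nat_mult[symmetric] of_nat_eq_iff)
  finally show ?thesis .
qed

lemma coprime_from_prim:
  fixes v0 v1 v2 :: "int \<times> int" and l0 l1 l2 :: nat
  assumes prim: "gcd (fst v0) (snd v0) = 1" and g: "gcd l0 (gcd l1 l2) = 1"
    and e1: "int l0 * fst v0 + int l1 * fst v1 + int l2 * fst v2 = 0"
    and e2: "int l0 * snd v0 + int l1 * snd v1 + int l2 * snd v2 = 0"
  shows "coprime l1 l2"
proof -
  let ?g = "int (gcd l1 l2)"
  have d1: "?g dvd int l1" "?g dvd int l2" by (simp_all add: int_dvd_int_iff)
  have "?g dvd int l0 * fst v0"
  proof -
    have "int l0 * fst v0 = - (int l1 * fst v1 + int l2 * fst v2)" using e1 by linarith
    moreover have "?g dvd int l1 * fst v1 + int l2 * fst v2" using d1 by simp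
    ultimately show ?thesis by simp
  qed
  moreover have "?g dvd int l0 * snd v0"
  proof -
    have "int l0 * snd v0 = - (int l1 * snd v1 + int l2 * snd v2)" using e2 by linarith
    moreover have "?g dvd int l1 * snd v1 + int l2 * snd v2" using d1 by simp
    ultimately show ?thesis by simp
  qed
  ultimately have "?g dvd gcd (int l0 * fst v0) (int l0 * snd v0)" by simp
  also have "gcd (int l0 * fst v0) (int l0 * snd v0) = int l0"
    using prim by (simp add: gcd_mult_left)
  finally have "gcd l1 l2 dvd l0" by (simp add: int_dvd_int_iff)
  then have "gcd l1 l2 dvd gcd l0 (gcd l1 l2)" by simp
  then show ?thesis using g by (simp add: coprime_iff_gcd_eq_1)
qed


(* ---- base/C0.thy ---- *)


lemma lat_inj: "lat x = lat y \<longleftrightarrow> x = y"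
  by (simp add: lat_def prod_eq_iff)

lemma lat_in: "lat x \<in> lattice_pts" by (simp add: lattice_pts_def)

lemma pair_add: "pair w (x + y) = pair w x + pair w y"
  by (simp add: pair_def algebra_simps)
lemma pair_scale: "pair w (c *\<^sub>R x) = c * pair w x"
  by (simp add: pair_def algebra_simps)
lemma pair_diff: "pair w (x - y) = pair w x - pair w y"
  by (simp add: pair_def algebra_simps)
lemma pair_lat: "pair w (lat v) = of_int (fst w * fst v + snd w * snd v)"
  by (simp add: pair_def lat_def)

lemma hull3: "z \<in> convex hull {A, B, C} \<longleftrightarrow>
  (\<exists>u v c. 0 \<le> u \<and> 0 \<le> v \<and> 0 \<le> c \<and> u + v + c = 1 \<and> z = u *\<^sub>R A + v *\<^sub>R B + c *\<^sub>R C)"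
  unfolding convex_hull_3 by blast


(* ---- base/C1.thy ---- *)


lemma two_int: "interior (convex hull {X, Y}) = ({}::pt set)" for X Y :: pt
  by (rule empty_interior_convex_hull) (auto simp: card_insert_if)

lemma tri_ext:
  fixes A B C :: pt
  assumes int: "(0::pt) \<in> interior (convex hull {A, B, C})"
  shows "A \<noteq> B" "A \<noteq> C" "B \<noteq> C" "{x. x extreme_point_of (convex hull {A, B, C})} = {A, B, C}"
proof -
  show "A \<noteq> B"
  proof
    assume "A = B" then have "{A, B, C} = {A, C}" by simp
    then show False using int two_int[of A C] by simp
  qed
  show "A \<noteq> C"
  proof
    assume "A = C" then have "{A, B, C} = {A, B}" by auto
    then show False using int two_int[of A B] by simp
  qed
  show "B \<noteq> C"
  proof
    assume "B = C" then have "{A, B, C} = {A, B}" by auto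
    then show False using int two_int[of A B] by simp
  qed
  let ?E = "{x. x extreme_point_of (convex hull {A, B, C})}"
  have KM: "convex hull {A, B, C} = convex hull ?E"
    by (rule Krein_Milman_polytope) simp
  have sub: "?E \<subseteq> {A, B, C}" by (rule extreme_points_of_convex_hull)
  have ext: "X \<in> ?E" if X: "X \<in> {A, B, C}" for X
  proof (rule ccontr)
    assume nX: "X \<notin> ?E"
    have "X = A \<or> X = B \<or> X = C" using X by simp
    then obtain Y Z where YZ: "{A, B, C} = {X, Y, Z}"
    proof (elim disjE)
      assume "X = A" then show ?thesis using that[of B C] by simp
    next
      assume "X = B" then show ?thesis using that[of A C] by (simp add: insert_commute)
    next
      assume "X = C" then have "{A, B, C} = {X, A, B}" by (simp add: insert_commute)
      then show ?thesis using that by blast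
    qed
    have "?E \<subseteq> {Y, Z}"
    proof
      fix x assume x: "x \<in> ?E"
      then have "x \<in> {X, Y, Z}" using sub YZ by (simp only: subset_iff)
      moreover have "x \<noteq> X" using x nX by (metis (no_types))
      ultimately show "x \<in> {Y, Z}" by simp
    qed
    then have H: "convex hull ?E \<subseteq> convex hull {Y, Z}" by (rule hull_mono)
    have "convex hull {A, B, C} \<subseteq> convex hull {Y, Z}" by (rule order_trans[OF equalityD1[OF KM] H])
    then have "interior (convex hull {A, B, C}) \<subseteq> interior (convex hull {Y, Z})" by (rule interior_mono)
    then show False using int two_int[of Y Z] by blast
  qed
  show "?E = {A, B, C}" by (rule equalityI[OF sub]) (intro subsetI ext)
qed

lemma fano_tri:
  assumes "fano_polygon (triangle v0 v1 v2)"
  shows "lat v0 \<noteq> lat v1" "lat v0 \<noteq> lat v2" "lat v1 \<noteq> lat v2"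
    "vertices (triangle v0 v1 v2) = {lat v0, lat v1, lat v2}"
    "primitive v0" "primitive v1" "primitive v2"
    "(0::pt) \<in> interior (triangle v0 v1 v2)"
proof -
  have int: "(0::pt) \<in> interior (convex hull {lat v0, lat v1, lat v2})"
    using assms unfolding fano_polygon_def triangle_def by (elim conjE)
  note T = tri_ext[OF int]
  show "lat v0 \<noteq> lat v1" "lat v0 \<noteq> lat v2" "lat v1 \<noteq> lat v2" using T(1-3) .
  show V: "vertices (triangle v0 v1 v2) = {lat v0, lat v1, lat v2}"
    using T(4) unfolding vertices_def triangle_def .
  have prim: "primitive v" if "lat v \<in> vertices (triangle v0 v1 v2)" for v
  proof -
    have "\<forall>v \<in> vertices (triangle v0 v1 v2). \<exists>z. primitive z \<and> v = lat z"
      using assms unfolding fano_polygon_def by (elim conjE)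
    then have "\<exists>z. primitive z \<and> lat v = lat z" using that by (rule bspec)
    then obtain z where z: "primitive z" "lat v = lat z" by (elim exE conjE)
    have "v = z" using z(2) unfolding lat_inj .
    then show ?thesis using z(1) by (simp only:)
  qed
  show "primitive v0" by (rule prim) (simp only: V insert_iff simp_thms)
  show "primitive v1" by (rule prim) (simp only: V insert_iff simp_thms)
  show "primitive v2" by (rule prim) (simp only: V insert_iff simp_thms)
  show "(0::pt) \<in> interior (triangle v0 v1 v2)" using int unfolding triangle_def .
qed

(* ---- sc/C2.thy ---- *)


lemma linear_extreme:
  fixes f :: "pt \<Rightarrow> pt"
  assumes "linear f" "inj f" "x extreme_point_of S"
  shows "f x extreme_point_of (f ` S)"
proof -
  interpret linear f by fact
  have "f x \<notin> open_segment (f a) (f b)" if "a \<in> S" "b \<in> S" for a b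
  proof
    assume "f x \<in> open_segment (f a) (f b)"
    then obtain u where u: "f a \<noteq> f b" "0 < u" "u < 1" "f x = (1 - u) *\<^sub>R f a + u *\<^sub>R f b"
      by (auto simp: in_segment)
    then have "f x = f ((1 - u) *\<^sub>R a + u *\<^sub>R b)" by (simp add: add scale)
    then have "x = (1 - u) *\<^sub>R a + u *\<^sub>R b" using assms(2) by (simp add: inj_eq)
    moreover have "a \<noteq> b" using u by auto
    ultimately have "x \<in> open_segment a b" using u by (auto simp: in_segment)
    then show False using assms(3) that by (auto simp: extreme_point_of_def)
  qed
  then show ?thesis using assms(3) by (auto simp: extreme_point_of_def)
qed

lemma extreme_subset: "x extreme_point_of T \<Longrightarrow> x \<in> R \<Longrightarrow> R \<subseteq> T \<Longrightarrow> x extreme_point_of R"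
  by (auto simp: extreme_point_of_def)

definition Lm :: "int \<Rightarrow> int \<Rightarrow> int \<Rightarrow> int \<Rightarrow> pt \<Rightarrow> pt" where
  "Lm a b c d = (\<lambda>(x, y). (of_int a * x + of_int b * y, of_int c * x + of_int d * y))"

lemma Lm_apply: "Lm a b c d z = (of_int a * fst z + of_int b * snd z, of_int c * fst z + of_int d * snd z)"
  by (simp add: Lm_def case_prod_beta)

lemma Lm_linear: "linear (Lm a b c d)"
  by (rule linearI) (simp_all add: Lm_apply algebra_simps)

lemma Lm_inj: assumes "\<bar>a * d - b * c\<bar> = 1" shows "inj (Lm a b c d)"
proof (rule injI)
  fix x y assume e: "Lm a b c d x = Lm a b c d y"
  have D: "real_of_int a * of_int d - of_int b * of_int c \<noteq> 0"
  proof -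
    have "a * d - b * c \<noteq> 0" using assms by auto
    then show ?thesis by (metis of_int_eq_0_iff of_int_diff of_int_mult)
  qed
  let ?p = "fst x - fst y" and ?q = "snd x - snd y"
  have 1: "of_int a * ?p + of_int b * ?q = 0" "of_int c * ?p + of_int d * ?q = 0"
    using e by (simp_all add: Lm_apply algebra_simps)
  have "(of_int a * of_int d - of_int b * of_int c) * ?p = 0"
  proof -
    have "(of_int a * of_int d - of_int b * of_int c) * ?p = of_int d * (of_int a * ?p + of_int b * ?q) - of_int b * (of_int c * ?p + of_int d * ?q)"
      by (simp add: algebra_simps)
    then show ?thesis using 1 by simp
  qed
  moreover have "(of_int a * of_int d - of_int b * of_int c) * ?q = 0"
  proof -
    have "(of_int a * of_int d - of_int b * of_int c) * ?q = of_int a * (of_int c * ?p + of_int d * ?q) - of_int c * (of_int a * ?p + of_int b * ?q)"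
      by (simp add: algebra_simps)
    then show ?thesis using 1 by simp
  qed
  ultimately show "x = y" using D by (simp add: prod_eq_iff)
qed

definition bmapI :: "int \<Rightarrow> int \<Rightarrow> int \<Rightarrow> int \<Rightarrow> int \<times> int \<Rightarrow> int \<times> int" where
  "bmapI p q r s x = (p * fst x + q * snd x, r * fst x + s * snd x)"

lemma Lm_lat: "Lm a b c d (lat v) = lat (bmapI a b c d v)"
  by (simp add: Lm_apply lat_def bmapI_def)

lemma three_ext:
  assumes Q: "fano_polygon (triangle u0 u1 u2)"
    and e: "y0 extreme_point_of (triangle u0 u1 u2)" "y1 extreme_point_of (triangle u0 u1 u2)"
      "y2 extreme_point_of (triangle u0 u1 u2)"
    and d: "y0 \<noteq> y1" "y0 \<noteq> y2" "y1 \<noteq> y2"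
  shows "{lat u0, lat u1, lat u2} = {y0, y1, y2}"
proof -
  note F = fano_tri[OF Q]
  have V: "{x. x extreme_point_of (triangle u0 u1 u2)} = {lat u0, lat u1, lat u2}"
    using F(4) unfolding vertices_def by simp
  have sub: "{y0, y1, y2} \<subseteq> {lat u0, lat u1, lat u2}" using e V by blast
  have c1: "card {y0, y1, y2} = 3" using d by simp
  have c2: "card {lat u0, lat u1, lat u2} = 3" using F(1-3) by simp
  show ?thesis using sub c1 c2 by (metis card_subset_eq finite.emptyI finite.insertI)
qed

lemma tri_hmin_hmax:
  fixes v0 v1 v2 w :: "int \<times> int"
  defines "e0 \<equiv> fst w * fst v0 + snd w * snd v0"
    and "e1 \<equiv> fst w * fst v1 + snd w * snd v1"
    and "e2 \<equiv> fst w * fst v2 + snd w * snd v2"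
  shows "hmin w (triangle v0 v1 v2) = of_int (min e0 (min e1 e2))"
    "hmax w (triangle v0 v1 v2) = of_int (max e0 (max e1 e2))"
    "z \<in> triangle v0 v1 v2 \<Longrightarrow> of_int (min e0 (min e1 e2)) \<le> pair w z \<and> pair w z \<le> of_int (max e0 (max e1 e2))"
proof -
  have pl: "pair w (lat v0) = of_int e0" "pair w (lat v1) = of_int e1" "pair w (lat v2) = of_int e2"
    by (simp_all add: pair_lat e0_def e1_def e2_def)
  have bnd: "of_int (min e0 (min e1 e2)) \<le> pair w z \<and> pair w z \<le> of_int (max e0 (max e1 e2))"
    if zin: "z \<in> triangle v0 v1 v2" for z
  proof -
    have "\<exists>u v c. 0 \<le> u \<and> 0 \<le> v \<and> 0 \<le> c \<and> u + v + c = 1 \<and> z = u *\<^sub>R lat v0 + v *\<^sub>R lat v1 + c *\<^sub>R lat v2"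
      using zin unfolding triangle_def hull3 .
    then obtain u v c where uvc: "0 \<le> u" "0 \<le> v" "0 \<le> c" "u + v + c = 1"
      "z = u *\<^sub>R lat v0 + v *\<^sub>R lat v1 + c *\<^sub>R lat v2"
      by blast
    have pz: "pair w z = u * of_int e0 + v * of_int e1 + c * of_int e2"
      using uvc(5) pl by (simp add: pair_add pair_scale)
    let ?m = "real_of_int (min e0 (min e1 e2))" and ?M = "real_of_int (max e0 (max e1 e2))"
    have "?m \<le> of_int e0" "?m \<le> of_int e1" "?m \<le> of_int e2" "of_int e0 \<le> ?M" "of_int e1 \<le> ?M" "of_int e2 \<le> ?M"
      by simp_all
    then have "u * ?m \<le> u * of_int e0" "v * ?m \<le> v * of_int e1" "c * ?m \<le> c * of_int e2"
      "u * of_int e0 \<le> u * ?M" "v * of_int e1 \<le> v * ?M" "c * of_int e2 \<le> c * ?M"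
      using uvc by (simp_all add: mult_left_mono)
    moreover have "?m = u * ?m + v * ?m + c * ?m"
    proof -
      have "u * ?m + v * ?m + c * ?m = (u + v + c) * ?m" by (simp only: distrib_right)
      then show ?thesis using uvc(4) by simp
    qed
    moreover have "?M = u * ?M + v * ?M + c * ?M"
    proof -
      have "u * ?M + v * ?M + c * ?M = (u + v + c) * ?M" by (simp only: distrib_right)
      then show ?thesis using uvc(4) by simp
    qed
    ultimately show ?thesis using pz by linarith
  qed
  then show "z \<in> triangle v0 v1 v2 \<Longrightarrow> of_int (min e0 (min e1 e2)) \<le> pair w z \<and> pair w z \<le> of_int (max e0 (max e1 e2))" .
  have mem: "lat v0 \<in> triangle v0 v1 v2" "lat v1 \<in> triangle v0 v1 v2" "lat v2 \<in> triangle v0 v1 v2"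
    unfolding triangle_def by (simp_all add: hull_inc)
  have "\<exists>z \<in> triangle v0 v1 v2. pair w z = of_int (min e0 (min e1 e2))"
  proof -
    have "min e0 (min e1 e2) = e0 \<or> min e0 (min e1 e2) = e1 \<or> min e0 (min e1 e2) = e2" by linarith
    then show ?thesis using mem pl by metis
  qed
  then obtain zm where zm: "zm \<in> triangle v0 v1 v2" "pair w zm = of_int (min e0 (min e1 e2))" by blast
  have "\<exists>z \<in> triangle v0 v1 v2. pair w z = of_int (max e0 (max e1 e2))"
  proof -
    have "max e0 (max e1 e2) = e0 \<or> max e0 (max e1 e2) = e1 \<or> max e0 (max e1 e2) = e2" by linarith
    then show ?thesis using mem pl by metis
  qed
  then obtain zM where zM: "zM \<in> triangle v0 v1 v2" "pair w zM = of_int (max e0 (max e1 e2))" by blast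
  show "hmin w (triangle v0 v1 v2) = of_int (min e0 (min e1 e2))"
    unfolding hmin_def
  proof (rule cInf_eq_minimum)
    show "of_int (min e0 (min e1 e2)) \<in> pair w ` triangle v0 v1 v2" using zm by (intro image_eqI[of _ "pair w" zm]) simp_all
    fix x assume "x \<in> pair w ` triangle v0 v1 v2"
    then obtain z where "z \<in> triangle v0 v1 v2" "x = pair w z" by (elim imageE)
    then show "of_int (min e0 (min e1 e2)) \<le> x" using bnd by simp
  qed
  show "hmax w (triangle v0 v1 v2) = of_int (max e0 (max e1 e2))"
    unfolding hmax_def
  proof (rule cSup_eq_maximum)
    show "of_int (max e0 (max e1 e2)) \<in> pair w ` triangle v0 v1 v2" using zM by (intro image_eqI[of _ "pair w" zM]) simp_all
    fix x assume "x \<in> pair w ` triangle v0 v1 v2"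
    then obtain z where "z \<in> triangle v0 v1 v2" "x = pair w z" by (elim imageE)
    then show "x \<le> of_int (max e0 (max e1 e2))" using bnd by simp
  qed
qed

lemma interior_heights:
  fixes w :: "int \<times> int"
  assumes "(0::pt) \<in> interior P" "w \<noteq> (0, 0)"
  shows "\<exists>z \<in> P. pair w z > 0" "\<exists>z \<in> P. pair w z < 0"
proof -
  obtain e where e: "e > 0" "ball 0 e \<subseteq> P" using assms(1) by (meson mem_interior)
  define W :: pt where "W = (of_int (fst w), of_int (snd w))"
  have W0: "W \<noteq> 0" using assms(2) by (auto simp: W_def prod_eq_iff)
  then have nW: "norm W > 0" by simp
  define c where "c = e / (2 * norm W)"
  have c: "c > 0" using e nW by (simp add: c_def)
  have pW: "pair w W > 0"
  proof -
    have "pair w W = of_int (fst w)^2 + of_int (snd w)^2" by (simp add: pair_def W_def power2_eq_square)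
    moreover have "of_int (fst w) \<noteq> (0::real) \<or> of_int (snd w) \<noteq> (0::real)" using assms(2) by (auto simp: prod_eq_iff)
    ultimately show ?thesis by (auto simp: add_pos_nonneg add_nonneg_pos)
  qed
  have nc: "norm (c *\<^sub>R W) < e" "norm (- (c *\<^sub>R W)) < e"
    using c nW e by (simp_all add: c_def)
  then have in1: "c *\<^sub>R W \<in> P" "- (c *\<^sub>R W) \<in> P" using e by (auto simp: dist_norm)
  have "pair w (c *\<^sub>R W) > 0" using c pW by (simp add: pair_scale)
  then show "\<exists>z \<in> P. pair w z > 0" using in1 by blast
  have "pair w (- (c *\<^sub>R W)) = - pair w (c *\<^sub>R W)" by (simp add: pair_def)
  then have "pair w (- (c *\<^sub>R W)) < 0" using \<open>pair w (c *\<^sub>R W) > 0\<close> by linarith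
  then show "\<exists>z \<in> P. pair w z < 0" using in1 by blast
qed

lemma hyper_convex: "convex (hyper w h)"
  unfolding convex_def hyper_def
proof (clarify)
  fix x y :: pt and u v :: real
  assume "pair w x = of_int h" "pair w y = of_int h" "u + v = 1"
  then show "pair w (u *\<^sub>R x + v *\<^sub>R y) = of_int h"
    by (simp add: pair_add pair_scale) (metis distrib_right mult_1)
qed

lemma slice_sub:
  assumes "convex P"
  shows "slice w h P \<subseteq> P \<inter> hyper w h"
  unfolding slice_def
  by (rule hull_minimal) (auto intro: convex_Int assms hyper_convex)

lemma slice_mem:
  assumes "lat v \<in> P" "pair w (lat v) = of_int h"
  shows "lat v \<in> slice w h P"
  unfolding slice_def using assms by (intro hull_inc) (simp add: hyper_def lat_in)


(* ---- sc/D.thy ---- *)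


lemma bmapI_bmap: "bmapI = bmap" by (simp add: bmapI_def bmap_def fun_eq_iff)

lemma vertex_match:
  assumes "{lat u0, lat u1, lat u2} = {lat x0, lat x1, lat x2}"
  shows "mult u0 u1 u2 = mult x0 x1 x2"
proof -
  have 1: "lat ` {u0, u1, u2} = lat ` {x0, x1, x2}" using assms by (simp only: image_insert image_empty)
  have "inj lat" by (simp add: inj_def lat_inj)
  then have e: "{u0, u1, u2} = {x0, x1, x2}" using 1 by (simp only: inj_image_eq_iff)
  have g: "y \<in> sublattice a b c" if "y \<in> {a, b, c}" for y a b c
    using that sublattice_gen(1)[of a b c] sublattice_gen(2)[of b a c] sublattice_gen(3)[of c a b] by blast
  have "u0 \<in> sublattice x0 x1 x2" "u1 \<in> sublattice x0 x1 x2" "u2 \<in> sublattice x0 x1 x2"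
    by (rule g, simp add: e[symmetric])+
  moreover have "x0 \<in> sublattice u0 u1 u2" "x1 \<in> sublattice u0 u1 u2" "x2 \<in> sublattice u0 u1 u2"
    by (rule g, simp add: e)+
  ultimately show ?thesis by (intro mult_cong sublattice_eqI)
qed

lemma mink_mem: "a \<in> A \<Longrightarrow> f \<in> F \<Longrightarrow> a + c *\<^sub>R f \<in> minkowski A ((*\<^sub>R) c ` F)"
  unfolding minkowski_def by blast

lemma mink_elim: "x \<in> minkowski A ((*\<^sub>R) c ` F) \<Longrightarrow> \<exists>a f. a \<in> A \<and> f \<in> F \<and> x = a + c *\<^sub>R f"
  unfolding minkowski_def by blast

lemma mutation_G:
  assumes "y \<in> G h" "hmin w P \<le> of_int h" "h < 0"
  shows "y \<in> mutation w P F G"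
  unfolding mutation_def using assms by (intro hull_inc) blast

lemma mutation_pos:
  assumes "z \<in> slice w h P" "f \<in> F" "0 \<le> h" "of_int h \<le> hmax w P"
  shows "z + of_int h *\<^sub>R f \<in> mutation w P F G"
proof -
  have m: "z + of_int h *\<^sub>R f \<in> minkowski (slice w h P) ((*\<^sub>R) (of_int h) ` F)"
    unfolding minkowski_def using assms(1,2) by blast
  show ?thesis unfolding mutation_def
    apply (rule hull_inc)
    apply (rule UnI2)
    apply (rule UN_I[where a=h])
    using assms(3,4) m by simp_all
qed

lemma mutation_sub:
  assumes "\<And>h y. hmin w P \<le> of_int h \<Longrightarrow> h < 0 \<Longrightarrow> y \<in> G h \<Longrightarrow> y \<in> T"
    and "\<And>h z f. 0 \<le> h \<Longrightarrow> of_int h \<le> hmax w P \<Longrightarrow> z \<in> slice w h P \<Longrightarrow> f \<in> F \<Longrightarrow> z + of_int h *\<^sub>R f \<in> T"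
    and "convex T"
  shows "mutation w P F G \<subseteq> T"
  unfolding mutation_def
  by (rule hull_minimal) (use assms in \<open>auto simp: minkowski_def\<close>)

lemma factor_neg:
  assumes "is_factor w P F G" "hmin w P \<le> of_int h" "h < 0"
  shows "G h \<subseteq> hyper w h"
    "hyper w h \<inter> vertices P \<subseteq> minkowski (G h) ((*\<^sub>R) (of_int (- h)) ` F)"
    "minkowski (G h) ((*\<^sub>R) (of_int (- h)) ` F) \<subseteq> slice w h P"
  using assms unfolding is_factor_def by blast+

lemma shear_case:
  fixes v0 v1 v2 u0 u1 u2 w g :: "int \<times> int"
  assumes P: "fano_polygon (triangle v0 v1 v2)" and Q: "fano_polygon (triangle u0 u1 u2)"
    and fac: "is_factor w (triangle v0 v1 v2) F G"
    and Fg: "F = {lat g}" and wg: "fst w * fst g + snd w * snd g = 0"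
    and det: "\<bar>a * d - b * c\<bar> = 1"
    and Qe: "triangle u0 u1 u2 = Lm a b c d ` mutation w (triangle v0 v1 v2) F G"
  shows "mult v0 v1 v2 = mult u0 u1 u2"
proof -
  let ?P = "triangle v0 v1 v2"
  let ?R = "mutation w ?P F G"
  note PF = fano_tri[OF P]
  have cP: "convex ?P" unfolding triangle_def by simp
  have pg: "pair w (lat g) = 0" using wg by (simp add: pair_lat)
  define Sh where "Sh z = z + pair w z *\<^sub>R lat g" for z
  have linSh: "linear Sh" unfolding Sh_def
    by (rule linearI) (simp_all add: pair_add pair_scale algebra_simps)
  have pSh: "pair w (Sh z) = pair w z" for z by (simp add: Sh_def pair_add pair_scale pg)
  have injSh: "inj Sh"
  proof (rule injI)
    fix x y assume e: "Sh x = Sh y"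
    then have "pair w x = pair w y" using pSh by metis
    then show "x = y" using e by (simp add: Sh_def)
  qed
  define gm where "gm = bmap (1 + fst g * fst w) (fst g * snd w) (snd g * fst w) (1 + snd g * snd w)"
  have Shlat: "Sh (lat v) = lat (gm v)" for v
    by (simp add: Sh_def gm_def bmap_def lat_def pair_def algebra_simps)
  have gmdet: "\<bar>(1 + fst g * fst w) * (1 + snd g * snd w) - fst g * snd w * (snd g * fst w)\<bar> = 1"
  proof -
    have "(1 + fst g * fst w) * (1 + snd g * snd w) - fst g * snd w * (snd g * fst w) = 1 + (fst w * fst g + snd w * snd g)"
      by (simp add: algebra_simps)
    also have "\<dots> = 1" using wg by (simp add: algebra_simps)
    finally show ?thesis by simp
  qed
  \<comment> \<open>R is contained in Sh(P)\<close>
  have RS: "?R \<subseteq> Sh ` ?P"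
  proof (rule mutation_sub)
    show "convex (Sh ` ?P)" by (rule convex_linear_image[OF linSh cP])
  next
    fix h y assume h: "hmin w ?P \<le> of_int h" "h < 0" and y: "y \<in> G h"
    note FN = factor_neg[OF fac h]
    have py: "pair w y = of_int h" using FN(1) y by (auto simp: hyper_def)
    have "y + of_int (- h) *\<^sub>R lat g \<in> minkowski (G h) ((*\<^sub>R) (of_int (- h)) ` F)"
      using y Fg by (intro mink_mem) simp_all
    then have "y + of_int (- h) *\<^sub>R lat g \<in> ?P" using FN(3) slice_sub[OF cP] by blast
    moreover have "Sh (y + of_int (- h) *\<^sub>R lat g) = y"
      by (simp add: Sh_def pair_add pair_diff pair_scale pg py)
    ultimately show "y \<in> Sh ` ?P" by (metis image_eqI)
  next
    fix h z f assume h: "0 \<le> h" "of_int h \<le> hmax w ?P" and z: "z \<in> slice w h ?P" and f: "f \<in> F"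
    have "z \<in> ?P \<inter> hyper w h" using z slice_sub[OF cP] by blast
    then have zP: "z \<in> ?P" and pz: "pair w z = of_int h" by (auto simp: hyper_def)
    have "f = lat g" using f Fg by simp
    then have "z + of_int h *\<^sub>R f = Sh z" by (simp add: Sh_def pz)
    then show "z + of_int h *\<^sub>R f \<in> Sh ` ?P" using zP by (simp only: image_eqI)
  qed
  \<comment> \<open>the sheared vertices lie in R\<close>
  have vin: "Sh (lat v) \<in> ?R" if v: "lat v \<in> vertices ?P" for v
  proof -
    define \<eta> where "\<eta> = fst w * fst v + snd w * snd v"
    have pv: "pair w (lat v) = of_int \<eta>" by (simp add: pair_lat \<eta>_def)
    have vP: "lat v \<in> ?P" using v unfolding vertices_def by (auto simp: extreme_point_of_def)
    note b3 = tri_hmin_hmax(3)[OF vP, of w]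
    have bnd: "hmin w ?P \<le> of_int \<eta>" "of_int \<eta> \<le> hmax w ?P"
      using tri_hmin_hmax(1,2)[of w v0 v1 v2] b3 pv by linarith+
    show ?thesis
    proof (cases "\<eta> < 0")
      case True
      note FN = factor_neg[OF fac bnd(1) True]
      have "lat v \<in> hyper w \<eta> \<inter> vertices ?P" using v pv by (simp add: hyper_def)
      then have "lat v \<in> minkowski (G \<eta>) ((*\<^sub>R) (of_int (- \<eta>)) ` F)" using FN(2) by (rule subsetD[rotated])
      then obtain y f where y: "y \<in> G \<eta>" "f \<in> F" "lat v = y + of_int (- \<eta>) *\<^sub>R f"
        by (metis mink_elim)
      have "f = lat g" using y(2) Fg by simp
      have "Sh (lat v) = y" using y(3) pv \<open>f = lat g\<close> by (simp add: Sh_def algebra_simps)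
      then show ?thesis using mutation_G[where G=G and h=\<eta> and F=F, OF y(1) bnd(1) True] by simp
    next
      case False
      have "lat v \<in> slice w \<eta> ?P" using slice_mem[OF vP pv] .
      then have "lat v + of_int \<eta> *\<^sub>R lat g \<in> ?R"
        using mutation_pos[of "lat v" w \<eta> ?P "lat g" F G] False bnd Fg by auto
      then show ?thesis by (simp add: Sh_def pv)
    qed
  qed
  have ext: "Lm a b c d (Sh (lat v)) extreme_point_of (triangle u0 u1 u2)" if v: "lat v \<in> vertices ?P" for v
  proof -
    have "lat v extreme_point_of ?P" using v by (simp add: vertices_def)
    then have "Sh (lat v) extreme_point_of (Sh ` ?P)" using linear_extreme[OF linSh injSh] by blast
    then have "Sh (lat v) extreme_point_of ?R" using vin[OF v] RS by (rule extreme_subset)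
    then show ?thesis unfolding Qe using linear_extreme[OF Lm_linear Lm_inj[OF det]] by blast
  qed
  have injLS: "x = y" if "Lm a b c d (Sh x) = Lm a b c d (Sh y)" for x y
    using injD[OF Lm_inj[OF det] that] injD[OF injSh] by blast
  have "{lat u0, lat u1, lat u2} = {Lm a b c d (Sh (lat v0)), Lm a b c d (Sh (lat v1)), Lm a b c d (Sh (lat v2))}"
    apply (rule three_ext[OF Q])
    using ext PF(4) apply auto[3]
    using PF(1-3) injLS by blast+
  also have "\<dots> = {lat (bmap a b c d (gm v0)), lat (bmap a b c d (gm v1)), lat (bmap a b c d (gm v2))}"
    by (simp add: Shlat Lm_lat bmapI_bmap)
  finally have "mult u0 u1 u2 = mult (bmap a b c d (gm v0)) (bmap a b c d (gm v1)) (bmap a b c d (gm v2))"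
    by (rule vertex_match)
  also have "\<dots> = mult (gm v0) (gm v1) (gm v2)" using mult_bmap[OF det] .
  also have "\<dots> = mult v0 v1 v2" unfolding gm_def using mult_bmap[OF gmdet] .
  finally show ?thesis by simp
qed


(* ---- sc/E0.thy ---- *)


definition aa :: "int \<Rightarrow> int \<Rightarrow> pt \<Rightarrow> real" where
  "aa s t z = of_int s * snd z - of_int t * fst z"

lemma aa_add: "aa s t (x + y) = aa s t x + aa s t y" by (simp add: aa_def algebra_simps)
lemma aa_scale: "aa s t (c *\<^sub>R x) = c * aa s t x" by (simp add: aa_def algebra_simps)
lemma aa_lat: "aa s t (lat v) = of_int (s * snd v - t * fst v)" by (simp add: aa_def lat_def)

lemma coord_eq:
  assumes st: "fst w * s + snd w * t = 1"
    and "pair w x = pair w y" "aa s t x = aa s t y"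
  shows "x = y"
proof -
  have st': "real_of_int (fst w) * of_int s + of_int (snd w) * of_int t = 1"
    using st by (metis of_int_1 of_int_add of_int_mult)
  have rec: "fst z = of_int s * pair w z - of_int (snd w) * aa s t z"
    "snd z = of_int t * pair w z + of_int (fst w) * aa s t z" for z
  proof -
    have "of_int s * pair w z - of_int (snd w) * aa s t z
        = fst z * (real_of_int (fst w) * of_int s + of_int (snd w) * of_int t)"
      by (simp add: pair_def aa_def algebra_simps)
    then show "fst z = of_int s * pair w z - of_int (snd w) * aa s t z" using st' by simp
    have "of_int t * pair w z + of_int (fst w) * aa s t z
        = snd z * (real_of_int (fst w) * of_int s + of_int (snd w) * of_int t)"
      by (simp add: pair_def aa_def algebra_simps)
    then show "snd z = of_int t * pair w z + of_int (fst w) * aa s t z" using st' by simp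
  qed
  show ?thesis using rec[of x] rec[of y] assms(2,3) by (simp add: prod_eq_iff)
qed

definition aff :: "(pt \<Rightarrow> real) \<Rightarrow> bool" where
  "aff f \<longleftrightarrow> (\<forall>x y u. f ((1 - u) *\<^sub>R x + u *\<^sub>R y) = (1 - u) * f x + u * f y)"

lemma aff_lin: "aff (\<lambda>z. k0 + k1 * aa s t z + k2 * pair w z)"
  unfolding aff_def by (simp add: aa_def pair_def algebra_simps)

lemma aff_eq: "(\<And>z. f z = k0 + k1 * aa s t z + k2 * pair w z) \<Longrightarrow> aff f"
proof -
  assume "\<And>z. f z = k0 + k1 * aa s t z + k2 * pair w z"
  then have "f = (\<lambda>z. k0 + k1 * aa s t z + k2 * pair w z)" by (simp add: fun_eq_iff)
  then show "aff f" using aff_lin by simp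
qed

lemma extreme_by_aff:
  assumes z: "z \<in> T" and af: "aff f" "aff g"
    and nn: "\<And>x. x \<in> T \<Longrightarrow> 0 \<le> f x" "\<And>x. x \<in> T \<Longrightarrow> 0 \<le> g x"
    and z0: "f z = 0" "g z = 0"
    and un: "\<And>x. x \<in> T \<Longrightarrow> f x = 0 \<Longrightarrow> g x = 0 \<Longrightarrow> x = z"
  shows "z extreme_point_of T"
proof -
  have "z \<notin> open_segment x y" if xy: "x \<in> T" "y \<in> T" for x y
  proof
    assume "z \<in> open_segment x y"
    then obtain u where u: "x \<noteq> y" "0 < u" "u < 1" "z = (1 - u) *\<^sub>R x + u *\<^sub>R y"
      by (auto simp: in_segment)
    have fz: "(1 - u) * f x + u * f y = 0" using z0(1) u(4) af(1) unfolding aff_def by metis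
    have gz: "(1 - u) * g x + u * g y = 0" using z0(2) u(4) af(2) unfolding aff_def by metis
    have "0 \<le> f x" "0 \<le> f y" "0 \<le> g x" "0 \<le> g y" using nn xy by auto
    moreover have "0 < 1 - u" using u by simp
    ultimately have "f x = 0 \<and> f y = 0 \<and> g x = 0 \<and> g y = 0" using fz gz u(2)
      by (smt (verit) mult_pos_pos mult_nonneg_nonneg)
    then have "x = z" "y = z" using un[of x] un[of y] xy by blast+
    then show False using u(1) by simp
  qed
  then show ?thesis using z by (auto simp: extreme_point_of_def)
qed

lemma convex_aff4:
  assumes "aff f1" "aff f2" "aff f3" "aff f4"
  shows "convex {z. 0 \<le> f1 z \<and> 0 \<le> f2 z \<and> 0 \<le> f3 z \<and> 0 \<le> f4 z}"
  unfolding convex_alt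
proof (intro ballI allI impI)
  fix x y and u :: real assume x: "x \<in> {z. 0 \<le> f1 z \<and> 0 \<le> f2 z \<and> 0 \<le> f3 z \<and> 0 \<le> f4 z}"
    and y: "y \<in> {z. 0 \<le> f1 z \<and> 0 \<le> f2 z \<and> 0 \<le> f3 z \<and> 0 \<le> f4 z}" and u: "0 \<le> u \<and> u \<le> 1"
  have "0 \<le> f ((1 - u) *\<^sub>R x + u *\<^sub>R y)" if "aff f" "0 \<le> f x" "0 \<le> f y" for f
  proof -
    have "f ((1 - u) *\<^sub>R x + u *\<^sub>R y) = (1 - u) * f x + u * f y" using that(1) unfolding aff_def by blast
    moreover have "0 \<le> (1 - u) * f x" "0 \<le> u * f y" using u that by simp_all
    ultimately show ?thesis by simp
  qed
  then show "(1 - u) *\<^sub>R x + u *\<^sub>R y \<in> {z. 0 \<le> f1 z \<and> 0 \<le> f2 z \<and> 0 \<le> f3 z \<and> 0 \<le> f4 z}"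
    using x y assms by simp
qed

lemma core_sub:
  fixes p q3 q4 g2 D :: "int \<times> int" and L0 L1 L2 H r \<kappa> x y x' y' :: int
  assumes X1f: "L2 * r * fst D = - L0 * fst q3 - (L1 + L2) * fst p"
    and X1s: "L2 * r * snd D = - L0 * snd q3 - (L1 + L2) * snd p"
    and XKf: "L2 * H * fst D = - (L1 + L2) * fst q3 - \<kappa> * fst p"
    and XKs: "L2 * H * snd D = - (L1 + L2) * snd q3 - \<kappa> * snd p"
    and E2: "L0 * H = (L1 + L2) * r"
    and q4: "q4 = (fst q3 + H * fst D, snd q3 + H * snd D)"
    and g2: "g2 = (fst p + r * fst D, snd p + r * snd D)"
    and b1: "x * L2 + y * L0 = 1" and b2: "x' * L2 + y' * (L1 + L2) = 1"
  shows "sublattice p q3 q4 = sublattice q3 p g2"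
proof (rule sublattice_eqI)
  show "p \<in> sublattice q3 p g2" "q3 \<in> sublattice q3 p g2" using sublattice_gen by auto
  show "q3 \<in> sublattice p q3 q4" "p \<in> sublattice p q3 q4" using sublattice_gen by auto
  show "q4 \<in> sublattice q3 p g2"
    unfolding sublattice_mem
  proof (intro exI)
    have f: "fst q4 = (1 - x * (L1 + L2)) * fst q3 + (- x * \<kappa> - y * (L1 + L2)) * fst p + y * (L1 + L2) * fst g2"
    proof -
      have "H * fst D = (x * L2 + y * L0) * H * fst D" using b1 by simp
      also have "\<dots> = x * (L2 * H * fst D) + y * (L0 * H) * fst D" by (simp add: algebra_simps)
      also have "\<dots> = x * (- (L1 + L2) * fst q3 - \<kappa> * fst p) + y * ((L1 + L2) * r) * fst D" using XKf E2 by simp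
      finally show ?thesis using q4 g2 by (simp add: algebra_simps)
    qed
    have s: "snd q4 = (1 - x * (L1 + L2)) * snd q3 + (- x * \<kappa> - y * (L1 + L2)) * snd p + y * (L1 + L2) * snd g2"
    proof -
      have "H * snd D = (x * L2 + y * L0) * H * snd D" using b1 by simp
      also have "\<dots> = x * (L2 * H * snd D) + y * (L0 * H) * snd D" by (simp add: algebra_simps)
      also have "\<dots> = x * (- (L1 + L2) * snd q3 - \<kappa> * snd p) + y * ((L1 + L2) * r) * snd D" using XKs E2 by simp
      finally show ?thesis using q4 g2 by (simp add: algebra_simps)
    qed
    show "q4 = ((1 - x * (L1 + L2)) * fst q3 + (- x * \<kappa> - y * (L1 + L2)) * fst p + y * (L1 + L2) * fst g2,
               (1 - x * (L1 + L2)) * snd q3 + (- x * \<kappa> - y * (L1 + L2)) * snd p + y * (L1 + L2) * snd g2)"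
      using f s by (simp add: prod_eq_iff)
  qed
  show "g2 \<in> sublattice p q3 q4"
    unfolding sublattice_mem
  proof (intro exI)
    have f: "fst g2 = (1 - x' * (L1 + L2)) * fst p + (- x' * L0 - y' * L0) * fst q3 + y' * L0 * fst q4"
    proof -
      have "r * fst D = (x' * L2 + y' * (L1 + L2)) * r * fst D" using b2 by simp
      also have "\<dots> = x' * (L2 * r * fst D) + y' * ((L1 + L2) * r) * fst D" by (simp add: algebra_simps)
      also have "\<dots> = x' * (- L0 * fst q3 - (L1 + L2) * fst p) + y' * (L0 * H) * fst D" using X1f E2 by simp
      finally show ?thesis using q4 g2 by (simp add: algebra_simps)
    qed
    have s: "snd g2 = (1 - x' * (L1 + L2)) * snd p + (- x' * L0 - y' * L0) * snd q3 + y' * L0 * snd q4"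
    proof -
      have "r * snd D = (x' * L2 + y' * (L1 + L2)) * r * snd D" using b2 by simp
      also have "\<dots> = x' * (L2 * r * snd D) + y' * ((L1 + L2) * r) * snd D" by (simp add: algebra_simps)
      also have "\<dots> = x' * (- L0 * snd q3 - (L1 + L2) * snd p) + y' * (L0 * H) * snd D" using X1s E2 by simp
      finally show ?thesis using q4 g2 by (simp add: algebra_simps)
    qed
    show "g2 = ((1 - x' * (L1 + L2)) * fst p + (- x' * L0 - y' * L0) * fst q3 + y' * L0 * fst q4,
               (1 - x' * (L1 + L2)) * snd p + (- x' * L0 - y' * L0) * snd q3 + y' * L0 * snd q4)"
      using f s by (simp add: prod_eq_iff)
  qed
qed


(* ---- se/E.thy ---- *)


lemma aa_diff: "aa s t (x - y) = aa s t x - aa s t y" by (simp add: aa_def algebra_simps)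

lemma prim_bmap:
  assumes "primitive (bmap a b c d p)"
  shows "primitive p"
proof -
  let ?g = "gcd (fst p) (snd p)"
  have d: "?g dvd gcd (fst (bmap a b c d p)) (snd (bmap a b c d p))"
    by (rule gcd_greatest) (simp_all add: bmap_def)
  have e: "gcd (fst (bmap a b c d p)) (snd (bmap a b c d p)) = 1" using assms unfolding primitive_def .
  have "?g dvd 1" using d unfolding e .
  then have "\<bar>?g\<bar> = 1" by (simp only: zdvd1_eq)
  then show ?thesis unfolding primitive_def by simp
qed

lemma X1_lemma:
  fixes L0 L1 L2 H r v0 v1 v2 ga gb p q :: int
  assumes "L0 * v0 + L1 * v1 + L2 * v2 = 0" "L0 * H = (L1 + L2) * r"
    "p = v1 - r * ga" "p = v2 - r * gb" "q = v0 + H * ga"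
  shows "L2 * r * (gb - ga) = - L0 * q - (L1 + L2) * p"
  using assms by algebra

lemma XK_lemma:
  fixes L0 L1 L2 H r D p q :: int
  assumes "L2 * r * D = - L0 * q - (L1 + L2) * p" "L0 * H = (L1 + L2) * r"
  shows "L0 * (L2 * H * D + (L1 + L2) * q) = - ((L1 + L2)^2) * p"
  using assms by algebra

lemma two_bottom:
  fixes v0 v1 v2 u0 u1 u2 w ga gb :: "int \<times> int" and l0 l1 l2 :: nat and r H s t a b c d :: int
  assumes P: "fano_polygon (triangle v0 v1 v2)" and Q: "fano_polygon (triangle u0 u1 u2)"
    and fac: "is_factor w (triangle v0 v1 v2) F G"
    and st: "fst w * s + snd w * t = 1"
    and wX: "fwpp_weights v0 v1 v2 l0 l1 l2"
    and cop: "coprime l0 l2" "coprime l1 l2"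
    and h0: "fst w * fst v0 + snd w * snd v0 = H"
    and h1: "fst w * fst v1 + snd w * snd v1 = - r"
    and h2: "fst w * fst v2 + snd w * snd v2 = - r"
    and Hp: "H > 0" and rp: "r > 0"
    and ord: "s * snd v1 - t * fst v1 < s * snd v2 - t * fst v2"
    and gaF: "lat ga \<in> F" and gbF: "lat gb \<in> F"
    and wga: "fst w * fst ga + snd w * snd ga = 0" and wgb: "fst w * fst gb + snd w * snd gb = 0"
    and Fb: "\<And>z. z \<in> F \<Longrightarrow> of_int (s * snd ga - t * fst ga) \<le> aa s t z \<and> aa s t z \<le> of_int (s * snd gb - t * fst gb)"
    and ab: "s * snd ga - t * fst ga < s * snd gb - t * fst gb"
    and det: "\<bar>a * d - b * c\<bar> = 1"
    and Qe: "triangle u0 u1 u2 = Lm a b c d ` mutation w (triangle v0 v1 v2) F G"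
  shows "mult v0 v1 v2 = mult u0 u1 u2"
proof -
  let ?P = "triangle v0 v1 v2"
  let ?R = "mutation w ?P F G"
  note PF = fano_tri[OF P]
  have cP: "convex ?P" unfolding triangle_def by simp
  have F0: "pair w f = 0" if "f \<in> F" for f
    using fac that unfolding is_factor_def by blast
  define \<alpha>0 where "\<alpha>0 = s * snd v0 - t * fst v0"
  define \<alpha>1 where "\<alpha>1 = s * snd v1 - t * fst v1"
  define \<alpha>2 where "\<alpha>2 = s * snd v2 - t * fst v2"
  define A where "A = s * snd ga - t * fst ga"
  define B where "B = s * snd gb - t * fst gb"
  define a0 where "a0 = (of_int \<alpha>0 :: real)"
  define a1 where "a1 = (of_int \<alpha>1 :: real)"
  define a2 where "a2 = (of_int \<alpha>2 :: real)"
  define ar where "ar = (of_int A :: real)"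
  define br where "br = (of_int B :: real)"
  define rr where "rr = (of_int r :: real)"
  define Hr where "Hr = (of_int H :: real)"
  have rrp: "rr > 0" and Hrp: "Hr > 0" using rp Hp by (simp_all add: rr_def Hr_def)
  have "\<alpha>1 < \<alpha>2" using ord by (simp add: \<alpha>1_def \<alpha>2_def)
  then have a12: "a1 < a2" by (simp add: a1_def a2_def)
  have "A < B" using ab by (simp add: A_def B_def)
  then have arb: "ar < br" by (simp add: ar_def br_def)
  have aav: "aa s t (lat v0) = a0" "aa s t (lat v1) = a1" "aa s t (lat v2) = a2"
    by (simp_all add: aa_lat a0_def a1_def a2_def \<alpha>0_def \<alpha>1_def \<alpha>2_def)
  have pv: "pair w (lat v0) = Hr" "pair w (lat v1) = - rr" "pair w (lat v2) = - rr"
    using h0 h1 h2 by (simp_all add: pair_lat Hr_def rr_def)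
  have aag: "aa s t (lat ga) = ar" "aa s t (lat gb) = br"
    by (simp_all add: aa_lat ar_def br_def A_def B_def)
  have pg: "pair w (lat ga) = 0" "pair w (lat gb) = 0" using wga wgb by (simp_all add: pair_lat)
  have Fb': "ar \<le> aa s t f \<and> aa s t f \<le> br" if "f \<in> F" for f
    using Fb[OF that] by (simp add: ar_def br_def A_def B_def)
  have hm: "hmin w ?P = - rr" "hmax w ?P = Hr"
    using tri_hmin_hmax(1,2)[of w v0 v1 v2] h0 h1 h2 Hp rp by (simp_all add: rr_def Hr_def)
  define \<phi>1 where "\<phi>1 z = (aa s t z - a1) * (Hr + rr) - (a0 - a1) * (pair w z + rr)" for z
  define \<phi>2 where "\<phi>2 z = (a2 - aa s t z) * (Hr + rr) - (a2 - a0) * (pair w z + rr)" for z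
  define \<psi>1 where "\<psi>1 z = (aa s t z - pair w z * ar - a1) * (Hr + rr) - (a0 - a1) * (pair w z + rr)" for z
  define \<psi>2 where "\<psi>2 z = (a2 - aa s t z + pair w z * br) * (Hr + rr) - (a2 - a0) * (pair w z + rr)" for z
  define flo where "flo z = pair w z + rr" for z
  define fhi where "fhi z = Hr - pair w z" for z
  have Pb: "0 \<le> \<phi>1 z \<and> 0 \<le> \<phi>2 z" if z: "z \<in> ?P" for z
  proof -
    obtain u v e where uve: "0 \<le> u" "0 \<le> v" "0 \<le> e" "u + v + e = 1"
      "z = u *\<^sub>R lat v0 + v *\<^sub>R lat v1 + e *\<^sub>R lat v2"
      using z unfolding triangle_def hull3 by blast
    have az: "aa s t z = u * a0 + v * a1 + e * a2" using uve(5) aav by (simp add: aa_add aa_scale)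
    have pz: "pair w z = u * Hr - v * rr - e * rr" using uve(5) pv by (simp add: pair_add pair_scale)
    have v: "v = 1 - u - e" using uve(4) by simp
    have "\<phi>1 z = e * (a2 - a1) * (Hr + rr)" unfolding \<phi>1_def az pz v by (simp add: algebra_simps)
    moreover have "\<phi>2 z = v * (a2 - a1) * (Hr + rr)" unfolding \<phi>2_def az pz
    proof -
      have u: "u = 1 - v - e" using uve(4) by simp
      show "(a2 - (u * a0 + v * a1 + e * a2)) * (Hr + rr) - (a2 - a0) * (u * Hr - v * rr - e * rr + rr) = v * (a2 - a1) * (Hr + rr)"
        unfolding u by (simp add: algebra_simps)
    qed
    ultimately show ?thesis using uve a12 rrp Hrp by simp
  qed
  define T where "T = {z. 0 \<le> flo z \<and> 0 \<le> fhi z \<and> 0 \<le> \<psi>1 z \<and> 0 \<le> \<psi>2 z}"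
  have aflo: "aff flo" by (rule aff_eq[of _ rr 0 s t 1 w]) (simp add: flo_def)
  have afhi: "aff fhi" by (rule aff_eq[of _ Hr 0 s t "-1" w]) (simp add: fhi_def)
  have af1: "aff \<psi>1"
    by (rule aff_eq[of _ "- a1 * (Hr + rr) - (a0 - a1) * rr" "Hr + rr" s t "- ar * (Hr + rr) - (a0 - a1)" w])
       (simp add: \<psi>1_def algebra_simps)
  have af2: "aff \<psi>2"
    by (rule aff_eq[of _ "a2 * (Hr + rr) - (a2 - a0) * rr" "- (Hr + rr)" s t "br * (Hr + rr) - (a2 - a0)" w])
       (simp add: \<psi>2_def algebra_simps)
  have cT: "convex T" unfolding T_def by (rule convex_aff4[OF aflo afhi af1 af2])
  have RT: "?R \<subseteq> T"
  proof (rule mutation_sub[OF _ _ cT])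
    fix h y assume h: "hmin w ?P \<le> of_int h" "h < 0" and y: "y \<in> G h"
    note FN = factor_neg[OF fac h]
    have py: "pair w y = of_int h" using FN(1) y by (auto simp: hyper_def)
    have "y + of_int (- h) *\<^sub>R lat ga \<in> minkowski (G h) ((*\<^sub>R) (of_int (- h)) ` F)"
      using y gaF by (intro mink_mem) simp_all
    then have "y + of_int (- h) *\<^sub>R lat ga \<in> ?P" using FN(3) slice_sub[OF cP] by blast
    then have 1: "0 \<le> \<phi>1 (y + of_int (- h) *\<^sub>R lat ga)" using Pb by blast
    have "y + of_int (- h) *\<^sub>R lat gb \<in> minkowski (G h) ((*\<^sub>R) (of_int (- h)) ` F)"
      using y gbF by (intro mink_mem) simp_all
    then have "y + of_int (- h) *\<^sub>R lat gb \<in> ?P" using FN(3) slice_sub[OF cP] by blast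
    then have 2: "0 \<le> \<phi>2 (y + of_int (- h) *\<^sub>R lat gb)" using Pb by blast
    have "\<phi>1 (y + of_int (- h) *\<^sub>R lat ga) = \<psi>1 y"
      unfolding \<phi>1_def \<psi>1_def by (simp add: aa_add aa_diff aa_scale pair_add pair_diff pair_scale aag pg py algebra_simps)
    moreover have "\<phi>2 (y + of_int (- h) *\<^sub>R lat gb) = \<psi>2 y"
      unfolding \<phi>2_def \<psi>2_def by (simp add: aa_add aa_diff aa_scale pair_add pair_diff pair_scale aag pg py algebra_simps)
    moreover have "0 \<le> flo y" "0 \<le> fhi y" using h hm py Hrp by (simp_all add: flo_def fhi_def)
    ultimately show "y \<in> T" using 1 2 by (simp add: T_def)
  next
    fix h z f assume h: "0 \<le> h" "of_int h \<le> hmax w ?P" and z: "z \<in> slice w h ?P" and f: "f \<in> F"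
    have "z \<in> ?P \<inter> hyper w h" using z slice_sub[OF cP] by blast
    then have zP: "z \<in> ?P" and pz: "pair w z = of_int h" by (auto simp: hyper_def)
    have pf: "pair w f = 0" using F0 f .
    have "\<psi>1 (z + of_int h *\<^sub>R f) = \<phi>1 z + of_int h * (aa s t f - ar) * (Hr + rr)"
      unfolding \<phi>1_def \<psi>1_def by (simp add: aa_add aa_diff aa_scale pair_add pair_diff pair_scale pf pz algebra_simps)
    moreover have "\<psi>2 (z + of_int h *\<^sub>R f) = \<phi>2 z + of_int h * (br - aa s t f) * (Hr + rr)"
      unfolding \<phi>2_def \<psi>2_def by (simp add: aa_add aa_diff aa_scale pair_add pair_diff pair_scale pf pz algebra_simps)
    moreover have "0 \<le> of_int h * (aa s t f - ar) * (Hr + rr)" "0 \<le> of_int h * (br - aa s t f) * (Hr + rr)"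
      using Fb'[OF f] h rrp Hrp by simp_all
    moreover have "0 \<le> flo (z + of_int h *\<^sub>R f)" "0 \<le> fhi (z + of_int h *\<^sub>R f)"
      using h hm rrp by (simp_all add: flo_def fhi_def pair_add pair_scale pf pz)
    ultimately show "z + of_int h *\<^sub>R f \<in> T" using Pb[OF zP] by (simp add: T_def)
  qed
  \<comment> \<open>corners\<close>
  define p1 where "p1 = (fst v1 - r * fst ga, snd v1 - r * snd ga)"
  define p2 where "p2 = (fst v2 - r * fst gb, snd v2 - r * snd gb)"
  define q3 where "q3 = (fst v0 + H * fst ga, snd v0 + H * snd ga)"
  define q4 where "q4 = (fst v0 + H * fst gb, snd v0 + H * snd gb)"
  have hr: "hmin w ?P \<le> of_int (- r)" "- r < 0" using hm rp by (simp_all add: rr_def)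
  note FN = factor_neg[OF fac hr]
  have v1h: "lat v1 \<in> hyper w (- r) \<inter> vertices ?P" using pv PF(4) by (simp add: hyper_def rr_def)
  have v2h: "lat v2 \<in> hyper w (- r) \<inter> vertices ?P" using pv PF(4) by (simp add: hyper_def rr_def)
  have "lat v1 \<in> minkowski (G (- r)) ((*\<^sub>R) (of_int (- (- r))) ` F)" using FN(2) v1h by (rule subsetD)
  then obtain y1 f1 where y1: "y1 \<in> G (- r)" "f1 \<in> F" "lat v1 = y1 + of_int r *\<^sub>R f1"
    by (metis mink_elim minus_minus)
  have "lat v2 \<in> minkowski (G (- r)) ((*\<^sub>R) (of_int (- (- r))) ` F)" using FN(2) v2h by (rule subsetD)
  then obtain y2 f2 where y2: "y2 \<in> G (- r)" "f2 \<in> F" "lat v2 = y2 + of_int r *\<^sub>R f2"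
    by (metis mink_elim minus_minus)
  have y1R: "y1 \<in> ?R" using mutation_G[where G=G and h="- r" and F=F, OF y1(1) hr] .
  have y2R: "y2 \<in> ?R" using mutation_G[where G=G and h="- r" and F=F, OF y2(1) hr] .
  have py1: "pair w y1 = - rr" using FN(1) y1(1) by (auto simp: hyper_def rr_def)
  have py2: "pair w y2 = - rr" using FN(1) y2(1) by (auto simp: hyper_def rr_def)
  have ay1: "aa s t y1 = a1 - rr * aa s t f1"
  proof -
    have "aa s t (lat v1) = aa s t y1 + rr * aa s t f1" using y1(3) by (simp add: aa_add aa_scale rr_def)
    then show ?thesis using aav by simp
  qed
  have ay2: "aa s t y2 = a2 - rr * aa s t f2"
  proof -
    have "aa s t (lat v2) = aa s t y2 + rr * aa s t f2" using y2(3) by (simp add: aa_add aa_scale rr_def)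
    then show ?thesis using aav by simp
  qed
  have ay1': "aa s t y1 = a1 - rr * ar"
  proof -
    have "0 \<le> \<psi>1 y1" using y1R RT by (auto simp: T_def)
    then have "0 \<le> (aa s t y1 + rr * ar - a1) * (Hr + rr)" by (simp add: \<psi>1_def py1 algebra_simps)
    then have "0 \<le> aa s t y1 + rr * ar - a1" using rrp Hrp by (simp add: zero_le_mult_iff)
    moreover have "rr * ar \<le> rr * aa s t f1" using Fb'[OF y1(2)] rrp by simp
    ultimately show ?thesis using ay1 by linarith
  qed
  have ay2': "aa s t y2 = a2 - rr * br"
  proof -
    have "0 \<le> \<psi>2 y2" using y2R RT by (auto simp: T_def)
    then have "0 \<le> (a2 - aa s t y2 - rr * br) * (Hr + rr)" by (simp add: \<psi>2_def py2 algebra_simps)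
    then have "0 \<le> a2 - aa s t y2 - rr * br" using rrp Hrp by (simp add: zero_le_mult_iff)
    moreover have "rr * aa s t f2 \<le> rr * br" using Fb'[OF y2(2)] rrp by simp
    ultimately show ?thesis using ay2 by linarith
  qed
  have ip: "fst w * fst p1 + snd w * snd p1 = (fst w * fst v1 + snd w * snd v1) - r * (fst w * fst ga + snd w * snd ga)"
     "fst w * fst p2 + snd w * snd p2 = (fst w * fst v2 + snd w * snd v2) - r * (fst w * fst gb + snd w * snd gb)"
     "fst w * fst q3 + snd w * snd q3 = (fst w * fst v0 + snd w * snd v0) + H * (fst w * fst ga + snd w * snd ga)"
     "fst w * fst q4 + snd w * snd q4 = (fst w * fst v0 + snd w * snd v0) + H * (fst w * fst gb + snd w * snd gb)"
    by (simp_all add: p1_def p2_def q3_def q4_def algebra_simps)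
  have ia: "s * snd p1 - t * fst p1 = \<alpha>1 - r * A" "s * snd p2 - t * fst p2 = \<alpha>2 - r * B"
     "s * snd q3 - t * fst q3 = \<alpha>0 + H * A" "s * snd q4 - t * fst q4 = \<alpha>0 + H * B"
    by (simp_all add: p1_def p2_def q3_def q4_def \<alpha>0_def \<alpha>1_def \<alpha>2_def A_def B_def algebra_simps)
  have lp1: "pair w (lat p1) = - rr" "aa s t (lat p1) = a1 - rr * ar"
    unfolding pair_lat aa_lat ip(1) ia(1) h1 wga by (simp_all add: rr_def a1_def ar_def)
  have lp2: "pair w (lat p2) = - rr" "aa s t (lat p2) = a2 - rr * br"
    unfolding pair_lat aa_lat ip(2) ia(2) h2 wgb by (simp_all add: rr_def a2_def br_def)
  have lq3: "pair w (lat q3) = Hr" "aa s t (lat q3) = a0 + Hr * ar"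
    unfolding pair_lat aa_lat ip(3) ia(3) h0 wga by (simp_all add: Hr_def a0_def ar_def)
  have lq4: "pair w (lat q4) = Hr" "aa s t (lat q4) = a0 + Hr * br"
    unfolding pair_lat aa_lat ip(4) ia(4) h0 wgb by (simp_all add: Hr_def a0_def br_def)
  have y1p: "y1 = lat p1" using coord_eq[OF st] py1 ay1' lp1 by metis
  have y2p: "y2 = lat p2" using coord_eq[OF st] py2 ay2' lp2 by metis
  have v0P: "lat v0 \<in> ?P" unfolding triangle_def by (simp add: hull_inc)
  have v0s: "lat v0 \<in> slice w H ?P" using slice_mem[OF v0P] pv by (simp add: Hr_def)
  have q3R: "lat q3 \<in> ?R"
  proof -
    have "lat v0 + of_int H *\<^sub>R lat ga \<in> ?R" using mutation_pos[OF v0s gaF] Hp hm by (simp add: Hr_def)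
    moreover have "lat v0 + of_int H *\<^sub>R lat ga = lat q3" by (simp add: lat_def q3_def)
    ultimately show ?thesis by simp
  qed
  have q4R: "lat q4 \<in> ?R"
  proof -
    have "lat v0 + of_int H *\<^sub>R lat gb \<in> ?R" using mutation_pos[OF v0s gbF] Hp hm by (simp add: Hr_def)
    moreover have "lat v0 + of_int H *\<^sub>R lat gb = lat q4" by (simp add: lat_def q4_def)
    ultimately show ?thesis by simp
  qed
  have p1R: "lat p1 \<in> ?R" using y1R y1p by simp
  have p2R: "lat p2 \<in> ?R" using y2R y2p by simp
  have inT: "x \<in> T" if "x \<in> ?R" for x using that RT by blast
  have nnT: "0 \<le> flo x" "0 \<le> fhi x" "0 \<le> \<psi>1 x" "0 \<le> \<psi>2 x" if "x \<in> T" for x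
    using that by (simp_all add: T_def)
  have HR: "Hr + rr > 0" using Hrp rrp by simp
  have e1: "lat p1 extreme_point_of T"
  proof (rule extreme_by_aff[OF inT[OF p1R] aflo af1])
    show "0 \<le> flo x" "0 \<le> \<psi>1 x" if "x \<in> T" for x using nnT[OF that] by simp_all
    show "flo (lat p1) = 0" "\<psi>1 (lat p1) = 0" using lp1 by (simp_all add: flo_def \<psi>1_def)
    show "x = lat p1" if "x \<in> T" "flo x = 0" "\<psi>1 x = 0" for x
    proof -
      have px: "pair w x = - rr" using that(2) by (simp add: flo_def)
      then have "(aa s t x + rr * ar - a1) * (Hr + rr) = 0" using that(3) by (simp add: \<psi>1_def algebra_simps)
      then have "aa s t x = a1 - rr * ar" using HR by simp
      then show ?thesis using coord_eq[OF st] px lp1 by metis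
    qed
  qed
  have e2: "lat p2 extreme_point_of T"
  proof (rule extreme_by_aff[OF inT[OF p2R] aflo af2])
    show "0 \<le> flo x" "0 \<le> \<psi>2 x" if "x \<in> T" for x using nnT[OF that] by simp_all
    show "flo (lat p2) = 0" "\<psi>2 (lat p2) = 0" using lp2 by (simp_all add: flo_def \<psi>2_def)
    show "x = lat p2" if "x \<in> T" "flo x = 0" "\<psi>2 x = 0" for x
    proof -
      have px: "pair w x = - rr" using that(2) by (simp add: flo_def)
      then have "(a2 - aa s t x - rr * br) * (Hr + rr) = 0" using that(3) by (simp add: \<psi>2_def algebra_simps)
      then have "aa s t x = a2 - rr * br" using HR by simp
      then show ?thesis using coord_eq[OF st] px lp2 by metis
    qed
  qed
  have e3: "lat q3 extreme_point_of T"
  proof (rule extreme_by_aff[OF inT[OF q3R] afhi af1])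
    show "0 \<le> fhi x" "0 \<le> \<psi>1 x" if "x \<in> T" for x using nnT[OF that] by simp_all
    show "fhi (lat q3) = 0" "\<psi>1 (lat q3) = 0" using lq3 by (simp_all add: fhi_def \<psi>1_def algebra_simps)
    show "x = lat q3" if "x \<in> T" "fhi x = 0" "\<psi>1 x = 0" for x
    proof -
      have px: "pair w x = Hr" using that(2) by (simp add: fhi_def)
      then have "(aa s t x - Hr * ar - a0) * (Hr + rr) = 0" using that(3) by (simp add: \<psi>1_def algebra_simps)
      then have "aa s t x = a0 + Hr * ar" using HR by simp
      then show ?thesis using coord_eq[OF st] px lq3 by metis
    qed
  qed
  have e4: "lat q4 extreme_point_of T"
  proof (rule extreme_by_aff[OF inT[OF q4R] afhi af2])
    show "0 \<le> fhi x" "0 \<le> \<psi>2 x" if "x \<in> T" for x using nnT[OF that] by simp_all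
    show "fhi (lat q4) = 0" "\<psi>2 (lat q4) = 0" using lq4 by (simp_all add: fhi_def \<psi>2_def algebra_simps)
    show "x = lat q4" if "x \<in> T" "fhi x = 0" "\<psi>2 x = 0" for x
    proof -
      have px: "pair w x = Hr" using that(2) by (simp add: fhi_def)
      then have "(a0 + Hr * br - aa s t x) * (Hr + rr) = 0" using that(3) by (simp add: \<psi>2_def algebra_simps)
      then have "aa s t x = a0 + Hr * br" using HR by simp
      then show ?thesis using coord_eq[OF st] px lq4 by metis
    qed
  qed
  let ?L = "Lm a b c d"
  have extQ: "?L z extreme_point_of (triangle u0 u1 u2)" if "z extreme_point_of T" "z \<in> ?R" for z
  proof -
    have "z extreme_point_of ?R" using extreme_subset[OF that RT] .
    then show ?thesis unfolding Qe using linear_extreme[OF Lm_linear Lm_inj[OF det]] by blast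
  qed
  have injL: "inj ?L" using Lm_inj[OF det] .
  have VQ: "{x. x extreme_point_of (triangle u0 u1 u2)} = {lat u0, lat u1, lat u2}"
    using fano_tri(4)[OF Q] unfolding vertices_def by simp
  have d34: "lat q3 \<noteq> lat q4" using lq3(2) lq4(2) arb Hrp by auto
  have d13: "lat p1 \<noteq> lat q3" "lat p1 \<noteq> lat q4" "lat p2 \<noteq> lat q3" "lat p2 \<noteq> lat q4"
    using lp1 lp2 lq3 lq4 rrp Hrp by (metis add.inverse_neutral less_asym neg_less_0_iff_less)+
  have p12: "p1 = p2"
  proof (rule ccontr)
    assume "p1 \<noteq> p2"
    then have d12: "lat p1 \<noteq> lat p2" by (simp add: lat_inj)
    let ?S = "{?L (lat p1), ?L (lat p2), ?L (lat q3), ?L (lat q4)}"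
    have "?S \<subseteq> {lat u0, lat u1, lat u2}"
      using extQ[OF e1 p1R] extQ[OF e2 p2R] extQ[OF e3 q3R] extQ[OF e4 q4R] VQ by blast
    then have "card ?S \<le> card {lat u0, lat u1, lat u2}" by (rule card_mono[rotated]) simp
    also have "\<dots> \<le> 3" by (simp add: card_insert_if)
    finally have "card ?S \<le> 3" .
    moreover have "card ?S = 4" using d12 d13 d34 injL by (simp add: inj_eq)
    ultimately show False by simp
  qed
  have "{lat u0, lat u1, lat u2} = {?L (lat p1), ?L (lat q3), ?L (lat q4)}"
    apply (rule three_ext[OF Q extQ[OF e1 p1R] extQ[OF e3 q3R] extQ[OF e4 q4R]])
    using d13 d34 injL by (simp_all add: inj_eq)
  then have U: "{lat u0, lat u1, lat u2} = {lat (bmap a b c d p1), lat (bmap a b c d q3), lat (bmap a b c d q4)}"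
    by (simp add: Lm_lat bmapI_bmap)
  then have m1: "mult u0 u1 u2 = mult (bmap a b c d p1) (bmap a b c d q3) (bmap a b c d q4)"
    by (rule vertex_match)
  have m2: "\<dots> = mult p1 q3 q4" using mult_bmap[OF det] .
  \<comment> \<open>primitivity of p1\<close>
  have "lat (bmap a b c d p1) \<in> {lat u0, lat u1, lat u2}" using U by simp
  then have "bmap a b c d p1 \<in> {u0, u1, u2}" by (auto simp: lat_inj)
  then have pb: "primitive (bmap a b c d p1)" using fano_tri(5-7)[OF Q] by auto
  have primp: "gcd (fst p1) (snd p1) = 1" using prim_bmap[OF pb] unfolding primitive_def .
  \<comment> \<open>integer identities\<close>
  define L0 where "L0 = int l0"
  define L1 where "L1 = int l1"
  define L2 where "L2 = int l2"
  have W1: "L0 * fst v0 + L1 * fst v1 + L2 * fst v2 = 0" and W2: "L0 * snd v0 + L1 * snd v1 + L2 * snd v2 = 0"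
    and L0p: "L0 > 0"
    using wX unfolding fwpp_weights_def L0_def L1_def L2_def by auto
  have E2: "L0 * H = (L1 + L2) * r"
  proof -
    have "fst w * (L0 * fst v0 + L1 * fst v1 + L2 * fst v2) + snd w * (L0 * snd v0 + L1 * snd v1 + L2 * snd v2) = 0"
      using W1 W2 by simp
    then have "L0 * (fst w * fst v0 + snd w * snd v0) + L1 * (fst w * fst v1 + snd w * snd v1) + L2 * (fst w * fst v2 + snd w * snd v2) = 0"
      by (simp add: algebra_simps)
    then have "L0 * H + L1 * (- r) + L2 * (- r) = 0" by (simp only: h0 h1 h2)
    then show ?thesis by (simp add: algebra_simps)
  qed
  have pp: "fst p1 = fst p2" "snd p1 = snd p2" using p12 by simp_all
  define D where "D = (fst gb - fst ga, snd gb - snd ga)"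
  have X1f: "L2 * r * fst D = - L0 * fst q3 - (L1 + L2) * fst p1"
    unfolding D_def fst_conv
    by (rule X1_lemma[OF W1 E2]) (use pp in \<open>simp_all add: p1_def p2_def q3_def\<close>)
  have X1s: "L2 * r * snd D = - L0 * snd q3 - (L1 + L2) * snd p1"
    unfolding D_def snd_conv
    by (rule X1_lemma[OF W2 E2]) (use pp in \<open>simp_all add: p1_def p2_def q3_def\<close>)
  have Kf: "L0 * (L2 * H * fst D + (L1 + L2) * fst q3) = - ((L1 + L2)^2) * fst p1" by (rule XK_lemma[OF X1f E2])
  have Ks: "L0 * (L2 * H * snd D + (L1 + L2) * snd q3) = - ((L1 + L2)^2) * snd p1" by (rule XK_lemma[OF X1s E2])
  have "L0 dvd (L1 + L2)^2 * fst p1" using Kf by (metis dvd_minus_iff dvd_triv_left mult_minus_left)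
  moreover have "L0 dvd (L1 + L2)^2 * snd p1" using Ks by (metis dvd_minus_iff dvd_triv_left mult_minus_left)
  ultimately have "L0 dvd gcd ((L1 + L2)^2 * fst p1) ((L1 + L2)^2 * snd p1)" by simp
  also have "gcd ((L1 + L2)^2 * fst p1) ((L1 + L2)^2 * snd p1) = (L1 + L2)^2"
    by (simp add: gcd_mult_left primp)
  finally obtain \<kappa> where \<kappa>: "(L1 + L2)^2 = L0 * \<kappa>" by (elim dvdE)
  have XKf: "L2 * H * fst D = - (L1 + L2) * fst q3 - \<kappa> * fst p1"
  proof -
    have "L0 * (L2 * H * fst D + (L1 + L2) * fst q3) = L0 * (- \<kappa> * fst p1)" using Kf \<kappa> by simp
    then have "L0 = 0 \<or> L2 * H * fst D + (L1 + L2) * fst q3 = - \<kappa> * fst p1" by (simp only: mult_cancel_left)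
    then have "L2 * H * fst D + (L1 + L2) * fst q3 = - \<kappa> * fst p1" using L0p by simp
    then show ?thesis by (simp add: algebra_simps)
  qed
  have XKs: "L2 * H * snd D = - (L1 + L2) * snd q3 - \<kappa> * snd p1"
  proof -
    have "L0 * (L2 * H * snd D + (L1 + L2) * snd q3) = L0 * (- \<kappa> * snd p1)" using Ks \<kappa> by simp
    then have "L0 = 0 \<or> L2 * H * snd D + (L1 + L2) * snd q3 = - \<kappa> * snd p1" by (simp only: mult_cancel_left)
    then have "L2 * H * snd D + (L1 + L2) * snd q3 = - \<kappa> * snd p1" using L0p by simp
    then show ?thesis by (simp add: algebra_simps)
  qed
  have "gcd L2 L0 = 1" using cop(1) unfolding L0_def L2_def by (simp add: coprime_iff_gcd_eq_1 gcd.commute)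
  then obtain x y where b1: "x * L2 + y * L0 = 1" using bezout_int[of L2 L0] by auto
  have "gcd L2 (L1 + L2) = 1"
  proof -
    have "gcd L2 (L1 + L2) = gcd L2 L1" by (metis add.commute gcd_add2)
    also have "\<dots> = 1" using cop(2) unfolding L1_def L2_def by (simp add: coprime_iff_gcd_eq_1 gcd.commute)
    finally show ?thesis .
  qed
  then obtain x' y' where b2: "x' * L2 + y' * (L1 + L2) = 1" using bezout_int[of L2 "L1 + L2"] by auto
  define g2 where "g2 = (fst p1 + r * fst D, snd p1 + r * snd D)"
  have q4D: "q4 = (fst q3 + H * fst D, snd q3 + H * snd D)" by (simp add: q4_def q3_def D_def algebra_simps)
  have SUB: "sublattice p1 q3 q4 = sublattice q3 p1 g2"
    by (rule core_sub[OF X1f X1s XKf XKs E2 q4D g2_def b1 b2])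
  define gm where "gm = bmap (1 + fst ga * fst w) (fst ga * snd w) (snd ga * fst w) (1 + snd ga * snd w)"
  have gmdet: "\<bar>(1 + fst ga * fst w) * (1 + snd ga * snd w) - fst ga * snd w * (snd ga * fst w)\<bar> = 1"
  proof -
    have "(1 + fst ga * fst w) * (1 + snd ga * snd w) - fst ga * snd w * (snd ga * fst w) = 1 + (fst w * fst ga + snd w * snd ga)"
      by (simp add: algebra_simps)
    also have "\<dots> = 1" using wga by simp
    finally show ?thesis by simp
  qed
  have gmv: "gm v = (fst v + (fst w * fst v + snd w * snd v) * fst ga, snd v + (fst w * fst v + snd w * snd v) * snd ga)" for v
    by (simp add: gm_def bmap_def algebra_simps)
  have g0: "gm v0 = q3" unfolding gmv h0 by (simp add: q3_def algebra_simps)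
  have g1: "gm v1 = p1" unfolding gmv h1 by (simp add: p1_def algebra_simps)
  have g2': "gm v2 = g2" unfolding gmv h2 using pp by (simp add: g2_def p2_def D_def algebra_simps)
  have "mult p1 q3 q4 = mult q3 p1 g2" using SUB by (rule mult_cong)
  also have "\<dots> = mult (gm v0) (gm v1) (gm v2)" by (simp add: g0 g1 g2')
  also have "\<dots> = mult v0 v1 v2" unfolding gm_def using mult_bmap[OF gmdet] .
  finally show ?thesis using m1 m2 by simp
qed


(* ---- se/F.thy ---- *)


lemma triangle_perm: "triangle v1 v0 v2 = triangle v0 v1 v2" "triangle v0 v2 v1 = triangle v0 v1 v2"
  by (simp_all add: triangle_def insert_commute)

lemma mult_perm: "mult v1 v0 v2 = mult v0 v1 v2" "mult v0 v2 v1 = mult v0 v1 v2"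
  by (rule vertex_match, simp add: insert_commute)+

lemma fwpp_perm:
  assumes "fwpp_weights v0 v1 v2 l0 l1 l2"
  shows "fwpp_weights v1 v0 v2 l1 l0 l2" "fwpp_weights v0 v2 v1 l0 l2 l1"
  using assms unfolding fwpp_weights_def
  by (simp_all add: gcd.left_commute gcd.commute algebra_simps)

lemma F_struct:
  assumes LF: "lattice_polytope F" and F0: "pair w ` F = {0}" and st: "fst w * s + snd w * t = 1"
  shows "\<exists>ga gb. lat ga \<in> F \<and> lat gb \<in> F \<and> fst w * fst ga + snd w * snd ga = 0 \<and>
     fst w * fst gb + snd w * snd gb = 0 \<and>
     (\<forall>z\<in>F. of_int (s * snd ga - t * fst ga) \<le> aa s t z \<and> aa s t z \<le> of_int (s * snd gb - t * fst gb)) \<and>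
     (ga = gb \<longrightarrow> F = {lat ga}) \<and> (ga \<noteq> gb \<longrightarrow> s * snd ga - t * fst ga < s * snd gb - t * fst gb)"
proof -
  obtain Fp where Fp: "finite Fp" "Fp \<subseteq> lattice_pts" "F = convex hull Fp"
    using LF unfolding lattice_polytope_def by blast
  have "F \<noteq> {}" using F0 by auto
  then have Fpne: "Fp \<noteq> {}" using Fp(3) by auto
  have FpF: "Fp \<subseteq> F" using Fp(3) by (simp add: hull_subset)
  have pF: "pair w z = 0" if "z \<in> F" for z using F0 that by blast
  let ?K = "aa s t ` Fp"
  have Kf: "finite ?K" "?K \<noteq> {}" using Fp(1) Fpne by simp_all
  obtain za where za: "za \<in> Fp" "aa s t za = Min ?K" using Min_in[OF Kf] by auto
  obtain zb where zb: "zb \<in> Fp" "aa s t zb = Max ?K" using Max_in[OF Kf] by auto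
  obtain ga where ga: "za = lat ga" using za(1) Fp(2) unfolding lattice_pts_def by blast
  obtain gb where gb: "zb = lat gb" using zb(1) Fp(2) unfolding lattice_pts_def by blast
  have gaF: "lat ga \<in> F" and gbF: "lat gb \<in> F" using za(1) zb(1) ga gb FpF by auto
  have wga: "fst w * fst ga + snd w * snd ga = 0"
  proof -
    have "pair w (lat ga) = 0" using pF[OF gaF] .
    then show ?thesis by (simp add: pair_lat del: of_int_add of_int_mult)
  qed
  have wgb: "fst w * fst gb + snd w * snd gb = 0"
  proof -
    have "pair w (lat gb) = 0" using pF[OF gbF] .
    then show ?thesis by (simp add: pair_lat del: of_int_add of_int_mult)
  qed
  define A where "A = aa s t (lat ga)"
  define B where "B = aa s t (lat gb)"
  let ?S = "{z. 0 \<le> aa s t z - A \<and> 0 \<le> B - aa s t z \<and> 0 \<le> aa s t z - A \<and> 0 \<le> B - aa s t z}"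
  have af1: "aff (\<lambda>z. aa s t z - A)" by (rule aff_eq[of _ "- A" 1 s t 0 w]) simp
  have af2: "aff (\<lambda>z. B - aa s t z)" by (rule aff_eq[of _ B "-1" s t 0 w]) simp
  have cS: "convex ?S" using convex_aff4[OF af1 af2 af1 af2] .
  have "Fp \<subseteq> ?S"
  proof
    fix z assume z: "z \<in> Fp"
    have "Min ?K \<le> aa s t z" "aa s t z \<le> Max ?K" using z Kf(1) by simp_all
    then show "z \<in> ?S" using za zb ga gb by (simp add: A_def B_def)
  qed
  then have FS: "F \<subseteq> ?S" unfolding Fp(3) using cS by (rule hull_minimal)
  have bnd: "\<forall>z\<in>F. of_int (s * snd ga - t * fst ga) \<le> aa s t z \<and> aa s t z \<le> of_int (s * snd gb - t * fst gb)"
  proof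
    fix z assume "z \<in> F"
    then have "z \<in> ?S" using FS by blast
    then show "of_int (s * snd ga - t * fst ga) \<le> aa s t z \<and> aa s t z \<le> of_int (s * snd gb - t * fst gb)"
      by (simp add: A_def B_def aa_lat)
  qed
  have c1: "ga = gb \<longrightarrow> F = {lat ga}"
  proof
    assume e: "ga = gb"
    have "z = lat ga" if "z \<in> F" for z
    proof (rule coord_eq[OF st])
      show "pair w z = pair w (lat ga)" using pF[OF that] pF[OF gaF] by simp
      have "z \<in> ?S" using FS that by blast
      then show "aa s t z = aa s t (lat ga)" using e by (simp add: A_def B_def)
    qed
    then show "F = {lat ga}" using gaF by blast
  qed
  have c2: "ga \<noteq> gb \<longrightarrow> s * snd ga - t * fst ga < s * snd gb - t * fst gb"
  proof
    assume ne: "ga \<noteq> gb"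
    have l1: "of_int (s * snd ga - t * fst ga) \<le> aa s t (lat gb)" using bnd gbF by blast
    have l2: "aa s t (lat gb) = of_int (s * snd gb - t * fst gb)" by (rule aa_lat)
    have le: "of_int (s * snd ga - t * fst ga) \<le> (of_int (s * snd gb - t * fst gb) :: real)"
      using l1 l2 by (rule ord_le_eq_trans)
    have "s * snd ga - t * fst ga \<noteq> s * snd gb - t * fst gb"
    proof
      assume eq: "s * snd ga - t * fst ga = s * snd gb - t * fst gb"
      have "lat ga = lat gb"
      proof (rule coord_eq[OF st])
        show "pair w (lat ga) = pair w (lat gb)" using pF[OF gaF] pF[OF gbF] by simp
        show "aa s t (lat ga) = aa s t (lat gb)" using eq by (simp add: aa_lat)
      qed
      then show False using ne by (simp add: lat_inj)
    qed
    moreover have "s * snd ga - t * fst ga \<le> s * snd gb - t * fst gb" using le by (simp only: of_int_le_iff)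
    ultimately show "s * snd ga - t * fst ga < s * snd gb - t * fst gb" by simp
  qed
  show ?thesis using gaF gbF wga wgb bnd c1 c2 by blast
qed

lemma single_bottom:
  fixes v0 v1 v2 w ga gb :: "int \<times> int"
  assumes P: "fano_polygon (triangle v0 v1 v2)"
    and fac: "is_factor w (triangle v0 v1 v2) F G"
    and h: "fst w * fst v0 + snd w * snd v0 < fst w * fst v1 + snd w * snd v1"
      "fst w * fst v0 + snd w * snd v0 < fst w * fst v2 + snd w * snd v2"
      "fst w * fst v0 + snd w * snd v0 < 0"
    and gaF: "lat ga \<in> F" and gbF: "lat gb \<in> F" and ne: "ga \<noteq> gb"
  shows False
proof -
  let ?P = "triangle v0 v1 v2"
  define e0 where "e0 = fst w * fst v0 + snd w * snd v0"
  define e1 where "e1 = fst w * fst v1 + snd w * snd v1"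
  define e2 where "e2 = fst w * fst v2 + snd w * snd v2"
  have cP: "convex ?P" unfolding triangle_def by simp
  note PF = fano_tri[OF P]
  have m: "min e0 (min e1 e2) = e0" using h by (simp add: e0_def e1_def e2_def)
  have hm: "hmin w ?P = of_int e0"
    using tri_hmin_hmax(1)[of w v0 v1 v2] m unfolding e0_def e1_def e2_def by (simp only:)
  have hr: "hmin w ?P \<le> of_int e0" "e0 < 0" using hm h by (simp_all add: e0_def)
  note FN = factor_neg[OF fac hr]
  have uniq: "z = lat v0" if "z \<in> ?P" "pair w z = of_int e0" for z
  proof -
    have "\<exists>u v c. 0 \<le> u \<and> 0 \<le> v \<and> 0 \<le> c \<and> u + v + c = 1 \<and> z = u *\<^sub>R lat v0 + v *\<^sub>R lat v1 + c *\<^sub>R lat v2"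
      using that(1) unfolding triangle_def hull3 .
    then obtain u v c where uvc: "0 \<le> u" "0 \<le> v" "0 \<le> c" "u + v + c = 1"
      "z = u *\<^sub>R lat v0 + v *\<^sub>R lat v1 + c *\<^sub>R lat v2" by blast
    have pz: "pair w z = u * of_int e0 + v * of_int e1 + c * of_int e2"
      using uvc(5) by (simp add: pair_add pair_scale pair_lat e0_def e1_def e2_def)
    have u: "u = 1 - v - c" using uvc(4) by simp
    have "v * (of_int e1 - of_int e0) + c * (of_int e2 - of_int e0) = 0"
      using pz that(2) unfolding u by (simp add: algebra_simps)
    moreover have "e0 < e1" "e0 < e2" using h by (simp_all add: e0_def e1_def e2_def)
    then have "(of_int e1 - of_int e0 :: real) > 0" "(of_int e2 - of_int e0 :: real) > 0" by simp_all
    ultimately have "v = 0" "c = 0" using uvc(2,3)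
      by (smt (verit) mult_nonneg_nonneg mult_pos_pos)+
    then show ?thesis using uvc(4,5) by simp
  qed
  have v0h: "lat v0 \<in> hyper w e0 \<inter> vertices ?P" using PF(4) by (simp add: hyper_def pair_lat e0_def)
  have "lat v0 \<in> minkowski (G e0) ((*\<^sub>R) (of_int (- e0)) ` F)" using FN(2) v0h by (rule subsetD)
  then obtain y f where y: "y \<in> G e0" "f \<in> F" "lat v0 = y + of_int (- e0) *\<^sub>R f" by (metis mink_elim)
  have "y + of_int (- e0) *\<^sub>R lat ga \<in> slice w e0 ?P" using FN(3) mink_mem[OF y(1) gaF] by blast
  then have "y + of_int (- e0) *\<^sub>R lat ga \<in> ?P \<inter> hyper w e0" using slice_sub[OF cP] by blast
  then have 1: "y + of_int (- e0) *\<^sub>R lat ga = lat v0" using uniq by (simp add: hyper_def)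
  have "y + of_int (- e0) *\<^sub>R lat gb \<in> slice w e0 ?P" using FN(3) mink_mem[OF y(1) gbF] by blast
  then have "y + of_int (- e0) *\<^sub>R lat gb \<in> ?P \<inter> hyper w e0" using slice_sub[OF cP] by blast
  then have 2: "y + of_int (- e0) *\<^sub>R lat gb = lat v0" using uniq by (simp add: hyper_def)
  have "y + of_int (- e0) *\<^sub>R lat ga = y + of_int (- e0) *\<^sub>R lat gb" by (simp only: 1 2)
  then have "of_int (- e0) *\<^sub>R lat ga = of_int (- e0) *\<^sub>R (lat gb :: pt)" by (simp only: add_left_cancel)
  then have "lat ga = lat gb \<or> (of_int (- e0) :: real) = 0" by (simp only: scaleR_cancel_left)
  then have "lat ga = lat gb" using hr(2) by simp
  then show False using ne by (simp add: lat_inj)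
qed


(* ---- se/G.thy ---- *)


lemma two_bottom_sym:
  fixes v0 v1 v2 u0 u1 u2 w ga gb :: "int \<times> int" and l0 l1 l2 :: nat and r H s t a b c d :: int
  assumes P: "fano_polygon (triangle v0 v1 v2)" and Q: "fano_polygon (triangle u0 u1 u2)"
    and fac: "is_factor w (triangle v0 v1 v2) F G"
    and st: "fst w * s + snd w * t = 1"
    and wX: "fwpp_weights v0 v1 v2 l0 l1 l2"
    and cop: "coprime l0 l1" "coprime l0 l2" "coprime l1 l2"
    and h0: "fst w * fst v0 + snd w * snd v0 = H"
    and h1: "fst w * fst v1 + snd w * snd v1 = - r"
    and h2: "fst w * fst v2 + snd w * snd v2 = - r"
    and Hp: "H > 0" and rp: "r > 0"
    and gaF: "lat ga \<in> F" and gbF: "lat gb \<in> F"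
    and wga: "fst w * fst ga + snd w * snd ga = 0" and wgb: "fst w * fst gb + snd w * snd gb = 0"
    and Fb: "\<And>z. z \<in> F \<Longrightarrow> of_int (s * snd ga - t * fst ga) \<le> aa s t z \<and> aa s t z \<le> of_int (s * snd gb - t * fst gb)"
    and ab: "s * snd ga - t * fst ga < s * snd gb - t * fst gb"
    and det: "\<bar>a * d - b * c\<bar> = 1"
    and Qe: "triangle u0 u1 u2 = Lm a b c d ` mutation w (triangle v0 v1 v2) F G"
  shows "mult v0 v1 v2 = mult u0 u1 u2"
proof -
  have ne: "s * snd v1 - t * fst v1 \<noteq> s * snd v2 - t * fst v2"
  proof
    assume e: "s * snd v1 - t * fst v1 = s * snd v2 - t * fst v2"
    have "lat v1 = lat v2"
    proof (rule coord_eq[OF st])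
      show "pair w (lat v1) = pair w (lat v2)" using h1 h2 by (simp only: pair_lat)
      show "aa s t (lat v1) = aa s t (lat v2)" using e by (simp only: aa_lat)
    qed
    then show False using fano_tri(3)[OF P] by simp
  qed
  show ?thesis
  proof (cases "s * snd v1 - t * fst v1 < s * snd v2 - t * fst v2")
    case True
    show ?thesis by (rule two_bottom[OF P Q fac st wX cop(2,3) h0 h1 h2 Hp rp True gaF gbF wga wgb Fb ab det Qe])
  next
    case False
    then have ord: "s * snd v2 - t * fst v2 < s * snd v1 - t * fst v1" using ne by simp
    have P': "fano_polygon (triangle v0 v2 v1)" using P by (simp only: triangle_perm)
    have fac': "is_factor w (triangle v0 v2 v1) F G" using fac by (simp only: triangle_perm)
    have Qe': "triangle u0 u1 u2 = Lm a b c d ` mutation w (triangle v0 v2 v1) F G" using Qe by (simp only: triangle_perm)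
    have "mult v0 v2 v1 = mult u0 u1 u2"
      by (rule two_bottom[OF P' Q fac' st fwpp_perm(2)[OF wX] cop(1) cop(3)[THEN coprime_commute[THEN iffD1]] h0 h2 h1 Hp rp ord gaF gbF wga wgb Fb ab det Qe'])
    then show ?thesis by (simp only: mult_perm)
  qed
qed

lemma dispatch0:
  fixes v0 v1 v2 u0 u1 u2 w ga gb :: "int \<times> int" and l0 l1 l2 :: nat and s t a b c d :: int
  assumes P: "fano_polygon (triangle v0 v1 v2)" and Q: "fano_polygon (triangle u0 u1 u2)"
    and fac: "is_factor w (triangle v0 v1 v2) F G"
    and w0: "w \<noteq> (0, 0)"
    and st: "fst w * s + snd w * t = 1"
    and wX: "fwpp_weights v0 v1 v2 l0 l1 l2"
    and cop: "coprime l0 l1" "coprime l0 l2" "coprime l1 l2"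
    and mx: "fst w * fst v1 + snd w * snd v1 \<le> fst w * fst v0 + snd w * snd v0"
      "fst w * fst v2 + snd w * snd v2 \<le> fst w * fst v0 + snd w * snd v0"
    and gaF: "lat ga \<in> F" and gbF: "lat gb \<in> F"
    and wga: "fst w * fst ga + snd w * snd ga = 0" and wgb: "fst w * fst gb + snd w * snd gb = 0"
    and Fb: "\<forall>z\<in>F. of_int (s * snd ga - t * fst ga) \<le> aa s t z \<and> aa s t z \<le> of_int (s * snd gb - t * fst gb)"
    and c1: "ga = gb \<longrightarrow> F = {lat ga}"
    and c2: "ga \<noteq> gb \<longrightarrow> s * snd ga - t * fst ga < s * snd gb - t * fst gb"
    and det: "\<bar>a * d - b * c\<bar> = 1"
    and Qe: "triangle u0 u1 u2 = Lm a b c d ` mutation w (triangle v0 v1 v2) F G"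
  shows "mult v0 v1 v2 = mult u0 u1 u2"
proof (cases "ga = gb")
  case True
  then have "F = {lat ga}" using c1 by simp
  then show ?thesis using shear_case[OF P Q fac _ wga det Qe] by simp
next
  case False
  then have ab: "s * snd ga - t * fst ga < s * snd gb - t * fst gb" using c2 by simp
  define e0 where "e0 = fst w * fst v0 + snd w * snd v0"
  define e1 where "e1 = fst w * fst v1 + snd w * snd v1"
  define e2 where "e2 = fst w * fst v2 + snd w * snd v2"
  have int0: "(0::pt) \<in> interior (triangle v0 v1 v2)" using fano_tri(8)[OF P] .
  obtain z1 where z1: "z1 \<in> triangle v0 v1 v2" "pair w z1 > 0" using interior_heights(1)[OF int0 w0] by blast
  obtain z2 where z2: "z2 \<in> triangle v0 v1 v2" "pair w z2 < 0" using interior_heights(2)[OF int0 w0] by blast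
  have "pair w z1 \<le> of_int (max e0 (max e1 e2))" using tri_hmin_hmax(3)[OF z1(1), of w] unfolding e0_def e1_def e2_def by simp
  then have "max e0 (max e1 e2) > 0" using z1(2) by linarith
  then have e0p: "e0 > 0" using mx unfolding e0_def e1_def e2_def by simp
  have "of_int (min e0 (min e1 e2)) \<le> pair w z2" using tri_hmin_hmax(3)[OF z2(1), of w] unfolding e0_def e1_def e2_def by simp
  then have mn: "min e0 (min e1 e2) < 0" using z2(2) by linarith
  have Fb': "\<And>z. z \<in> F \<Longrightarrow> of_int (s * snd ga - t * fst ga) \<le> aa s t z \<and> aa s t z \<le> of_int (s * snd gb - t * fst gb)"
    using Fb by blast
  consider (eq) "e1 = e2" | (lt) "e1 < e2" | (gt) "e2 < e1" by linarith
  then show ?thesis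
  proof cases
    case eq
    then have e1n: "e1 < 0" using mn e0p by simp
    show ?thesis
      by (rule two_bottom_sym[OF P Q fac st wX cop _ _ _ _ _ gaF gbF wga wgb Fb' ab det Qe, where H = e0 and r = "- e1"])
         (use eq e0p e1n in \<open>simp_all add: e0_def e1_def e2_def\<close>)
  next
    case lt
    have P': "fano_polygon (triangle v1 v0 v2)" using P by (simp only: triangle_perm)
    have fac': "is_factor w (triangle v1 v0 v2) F G" using fac by (simp only: triangle_perm)
    have "e1 < 0" using lt mn e0p by linarith
    show ?thesis
      by (rule FalseE, rule single_bottom[OF P' fac' _ _ _ gaF gbF False])
         (use lt \<open>e1 < 0\<close> e0p in \<open>simp_all add: e0_def e1_def e2_def\<close>)
  next
    case gt
    have P': "fano_polygon (triangle v2 v0 v1)" using P by (simp add: triangle_def insert_commute)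
    have fac': "is_factor w (triangle v2 v0 v1) F G" using fac by (simp add: triangle_def insert_commute)
    have "e2 < 0" using gt mn e0p by linarith
    show ?thesis
      by (rule FalseE, rule single_bottom[OF P' fac' _ _ _ gaF gbF False])
         (use gt \<open>e2 < 0\<close> e0p in \<open>simp_all add: e0_def e1_def e2_def\<close>)
  qed
qed


(* ---- se/H.thy ---- *)


lemma Lm_inverse:
  assumes "\<bar>a * d - b * c\<bar> = 1"
  shows "\<exists>a' b' c' d'. \<bar>a' * d' - b' * c'\<bar> = 1 \<and> (\<forall>z. Lm a' b' c' d' (Lm a b c d z) = z)"
proof -
  define \<delta> where "\<delta> = a * d - b * c"
  have "\<delta> = 1 \<or> \<delta> = -1" using assms unfolding \<delta>_def by (auto simp: abs_if split: if_splits)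
  then have d2: "\<delta> * \<delta> = 1" by auto
  have det: "\<bar>(\<delta> * d) * (\<delta> * a) - (- \<delta> * b) * (- \<delta> * c)\<bar> = 1"
  proof -
    have "(\<delta> * d) * (\<delta> * a) - (- \<delta> * b) * (- \<delta> * c) = (\<delta> * \<delta>) * \<delta>" by (simp add: \<delta>_def algebra_simps)
    then show ?thesis using d2 assms by (simp add: \<delta>_def)
  qed
  have inv: "Lm (\<delta> * d) (- \<delta> * b) (- \<delta> * c) (\<delta> * a) (Lm a b c d z) = z" for z
  proof -
    have "Lm (\<delta> * d) (- \<delta> * b) (- \<delta> * c) (\<delta> * a) (Lm a b c d z) =
      (of_int (\<delta> * \<delta>) * fst z, of_int (\<delta> * \<delta>) * snd z)"
      by (simp add: Lm_apply \<delta>_def algebra_simps)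
    then show ?thesis using d2 by simp
  qed
  show ?thesis using det inv by blast
qed

lemma main_mult:
  fixes v0 v1 v2 u0 u1 u2 :: "int \<times> int" and l0 l1 l2 :: nat
  assumes P: "fano_polygon (triangle v0 v1 v2)" and Q: "fano_polygon (triangle u0 u1 u2)"
    and mut: "one_step_mutation (triangle v0 v1 v2) (triangle u0 u1 u2)"
    and wX: "fwpp_weights v0 v1 v2 l0 l1 l2"
    and cop: "coprime l0 l1" "coprime l0 l2" "coprime l1 l2"
  shows "mult v0 v1 v2 = mult u0 u1 u2"
proof -
  obtain w F G where prim: "primitive w" and fac: "is_factor w (triangle v0 v1 v2) F G"
    and iso: "iso (triangle u0 u1 u2) (mutation w (triangle v0 v1 v2) F G)"
    using mut unfolding one_step_mutation_def by blast
  obtain a0 b0 c0 d0 where det0: "\<bar>a0 * d0 - b0 * c0\<bar> = 1"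
    and Re: "mutation w (triangle v0 v1 v2) F G = (\<lambda>(x, y). (of_int a0 * x + of_int b0 * y, of_int c0 * x + of_int d0 * y)) ` triangle u0 u1 u2"
    using iso unfolding iso_def by blast
  have Re': "mutation w (triangle v0 v1 v2) F G = Lm a0 b0 c0 d0 ` triangle u0 u1 u2"
    using Re unfolding Lm_def .
  obtain a b c d where det: "\<bar>a * d - b * c\<bar> = 1" and inv: "\<And>z. Lm a b c d (Lm a0 b0 c0 d0 z) = z"
    using Lm_inverse[OF det0] by blast
  have Qe: "triangle u0 u1 u2 = Lm a b c d ` mutation w (triangle v0 v1 v2) F G"
    unfolding Re' image_comp by (simp add: comp_def inv)
  have w0: "w \<noteq> (0, 0)" using prim unfolding primitive_def by auto
  obtain s t where "s * fst w + t * snd w = gcd (fst w) (snd w)" using bezout_int by blast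
  then have st: "fst w * s + snd w * t = 1" using prim unfolding primitive_def by (simp add: algebra_simps)
  have LF: "lattice_polytope F" and F0: "pair w ` F = {0}" using fac unfolding is_factor_def by blast+
  obtain ga gb where gaF: "lat ga \<in> F" and gbF: "lat gb \<in> F"
    and wga: "fst w * fst ga + snd w * snd ga = 0" and wgb: "fst w * fst gb + snd w * snd gb = 0"
    and Fb: "\<forall>z\<in>F. of_int (s * snd ga - t * fst ga) \<le> aa s t z \<and> aa s t z \<le> of_int (s * snd gb - t * fst gb)"
    and c1: "ga = gb \<longrightarrow> F = {lat ga}"
    and c2: "ga \<noteq> gb \<longrightarrow> s * snd ga - t * fst ga < s * snd gb - t * fst gb"
    using F_struct[OF LF F0 st] by blast
  define e0 where "e0 = fst w * fst v0 + snd w * snd v0"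
  define e1 where "e1 = fst w * fst v1 + snd w * snd v1"
  define e2 where "e2 = fst w * fst v2 + snd w * snd v2"
  consider (m0) "e1 \<le> e0" "e2 \<le> e0" | (m1) "e0 \<le> e1" "e2 \<le> e1" | (m2) "e0 \<le> e2" "e1 \<le> e2" by linarith
  then show ?thesis
  proof cases
    case m0
    show ?thesis by (rule dispatch0[OF P Q fac w0 st wX cop _ _ gaF gbF wga wgb Fb c1 c2 det Qe])
      (use m0 in \<open>simp_all add: e0_def e1_def e2_def\<close>)
  next
    case m1
    have P': "fano_polygon (triangle v1 v0 v2)" using P by (simp only: triangle_perm)
    have fac': "is_factor w (triangle v1 v0 v2) F G" using fac by (simp only: triangle_perm)
    have Qe': "triangle u0 u1 u2 = Lm a b c d ` mutation w (triangle v1 v0 v2) F G" using Qe by (simp only: triangle_perm)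
    have "mult v1 v0 v2 = mult u0 u1 u2"
      by (rule dispatch0[OF P' Q fac' w0 st fwpp_perm(1)[OF wX] cop(1)[THEN coprime_commute[THEN iffD1]] cop(3) cop(2) _ _ gaF gbF wga wgb Fb c1 c2 det Qe'])
        (use m1 in \<open>simp_all add: e0_def e1_def e2_def\<close>)
    then show ?thesis by (simp only: mult_perm)
  next
    case m2
    have T: "triangle v2 v0 v1 = triangle v0 v1 v2" by (simp add: triangle_def insert_commute)
    have P': "fano_polygon (triangle v2 v0 v1)" using P by (simp only: T)
    have fac': "is_factor w (triangle v2 v0 v1) F G" using fac by (simp only: T)
    have Qe': "triangle u0 u1 u2 = Lm a b c d ` mutation w (triangle v2 v0 v1) F G" using Qe by (simp only: T)
    have wX': "fwpp_weights v2 v0 v1 l2 l0 l1" using fwpp_perm(1)[OF fwpp_perm(2)[OF wX]] .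
    have "mult v2 v0 v1 = mult u0 u1 u2"
      by (rule dispatch0[OF P' Q fac' w0 st wX' cop(2)[THEN coprime_commute[THEN iffD1]] cop(3)[THEN coprime_commute[THEN iffD1]] cop(1) _ _ gaF gbF wga wgb Fb c1 c2 det Qe'])
        (use m2 in \<open>simp_all add: e0_def e1_def e2_def\<close>)
    moreover have "mult v2 v0 v1 = mult v0 v1 v2" by (rule vertex_match) (simp add: insert_commute)
    ultimately show ?thesis by simp
  qed
qed


(* ---- se/I.thy ---- *)


lemma cop_from_fwpp:
  assumes "fwpp_weights v0 v1 v2 l0 l1 l2" "primitive v0"
  shows "coprime l1 l2"
  using assms unfolding fwpp_weights_def primitive_def
  by (intro coprime_from_prim[of v0 l0 l1 l2 v1 v2]) (elim conjE; assumption)+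

theorem proposition3p11:
  fixes v0 v1 v2 u0 u1 u2 :: "int \<times> int"
    and l0 l1 l2 l0' a0 a1 a2 a0' c0 c1 c2 c0' :: nat
  assumes P: "fano_polygon (triangle v0 v1 v2)"
    and Q: "fano_polygon (triangle u0 u1 u2)"
    and mut: "one_step_mutation (triangle v0 v1 v2) (triangle u0 u1 u2)"
    and wX: "fwpp_weights v0 v1 v2 l0 l1 l2"
    and wY: "fwpp_weights u0 u1 u2 l0' l1 l2"
    and l0': "l0 * l0' = (l1 + l2)^2"
    and pos: "a0 > 0" "a1 > 0" "a2 > 0" "a0' > 0" "c0 > 0" "c1 > 0" "c2 > 0" "c0' > 0"
    and sf: "squarefree c0" "squarefree c1" "squarefree c2" "squarefree c0'"
    and dec: "l0 = c0 * a0^2" "l1 = c1 * a1^2" "l2 = c2 * a2^2" "l0' = c0' * a0'^2"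
  shows "c0' = c0 \<and>
    deg_ratio l1 l2 l0' = deg_ratio l0 l1 l2 \<and>
    (\<exists>m k r :: nat. m > 0 \<and> k > 0 \<and> r > 0 \<and> squarefree r \<and>
        deg_ratio l0 l1 l2 = of_nat (m^2) / of_nat (r * k^2)) \<and>
    (\<forall>m k r :: nat. m > 0 \<and> k > 0 \<and> r > 0 \<and> squarefree r \<and>
        deg_ratio l0 l1 l2 = of_nat (m^2) / of_nat (r * k^2) \<longrightarrow>
        m * a0 * a1 * a2 = k * (c0 * a0^2 + c1 * a1^2 + c2 * a2^2) \<and>
        m * a0' * a1 * a2 = k * (c0 * a0'^2 + c1 * a1^2 + c2 * a2^2)) \<and>
    mult v0 v1 v2 = mult u0 u1 u2"
proof -
  note PF = fano_tri[OF P]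
  have cop12: "coprime l1 l2" by (rule cop_from_fwpp[OF wX PF(5)])
  have cop02: "coprime l0 l2" by (rule cop_from_fwpp[OF fwpp_perm(1)[OF wX] PF(6)])
  have cop01: "coprime l0 l1" by (rule cop_from_fwpp[OF fwpp_perm(1)[OF fwpp_perm(2)[OF wX]] PF(7)])
  have MULT: "mult v0 v1 v2 = mult u0 u1 u2" by (rule main_mult[OF P Q mut wX cop01 cop02 cop12])
  have lpos: "l0 > 0" "l1 > 0" "l2 > 0" using wX unfolding fwpp_weights_def by simp_all
  have l0'pos: "l0' > 0" using wY unfolding fwpp_weights_def by simp
  \<comment> \<open>c0' = c0\<close>
  have "c0 * c0' * (a0 * a0')^2 = (l1 + l2)^2" using l0' dec(1,4) by (simp add: power_mult_distrib algebra_simps)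
  then have C0: "c0' = c0"
    using sqf_eq2[OF sf(1) sf(4)] pos lpos by (metis add_gr_0 mult_eq_0_iff not_gr0 power_not_zero)
  \<comment> \<open>degree equality\<close>
  have DR: "deg_ratio l1 l2 l0' = deg_ratio l0 l1 l2"
  proof -
    have h: "int l0 * int l0' = (int l1 + int l2)^2" using l0' by (metis of_nat_add of_nat_mult of_nat_power)
    have "(int l1 + int l2 + int l0')^2 * (int l0 * int l1 * int l2) = (int l0 + int l1 + int l2)^2 * (int l1 * int l2 * int l0')"
      using h by algebra
    then have "int ((l1 + l2 + l0')^2 * (l0 * l1 * l2)) = int ((l0 + l1 + l2)^2 * (l1 * l2 * l0'))"
      by (simp only: of_nat_add of_nat_mult of_nat_power)
    then have "(l1 + l2 + l0')^2 * (l0 * l1 * l2) = (l0 + l1 + l2)^2 * (l1 * l2 * l0')" by (simp only: of_nat_eq_iff)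
    then show ?thesis using deg_ratio_eq[of l1 l2 l0' l0 l1 l2] lpos l0'pos by simp
  qed
  \<comment> \<open>squarefree product\<close>
  define C where "C = c0 * c1 * c2"
  have cc: "coprime c0 c1" "coprime c0 c2" "coprime c1 c2"
    using coprime_divisors[of c0 l0 c1 l1] coprime_divisors[of c0 l0 c2 l2] coprime_divisors[of c1 l1 c2 l2]
      cop01 cop02 cop12 dec(1-3) by simp_all
  have sqC: "squarefree C"
  proof -
    have "squarefree (c0 * c1)" by (rule squarefree_mult_coprime[OF cc(1) sf(1,2)])
    moreover have "coprime (c0 * c1) c2" using cc(2,3) by simp
    ultimately show ?thesis unfolding C_def using sf(3) squarefree_mult_coprime by blast
  qed
  have Cpos: "C > 0" using pos by (simp add: C_def)
  define A where "A = a0 * a1 * a2"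
  define A' where "A' = a0' * a1 * a2"
  define S where "S = c0 * a0^2 + c1 * a1^2 + c2 * a2^2"
  define S' where "S' = c0 * a0'^2 + c1 * a1^2 + c2 * a2^2"
  have Apos: "A > 0" "A' > 0" "S > 0" "S' > 0" using pos by (simp_all add: A_def A'_def S_def S'_def)
  have prodX: "l0 * l1 * l2 = C * A^2" using dec by (simp add: C_def A_def power_mult_distrib algebra_simps)
  have sumX: "l0 + l1 + l2 = S" using dec by (simp add: S_def)
  have prodY: "l1 * l2 * l0' = C * A'^2" using dec C0 by (simp add: C_def A'_def power_mult_distrib algebra_simps)
  have sumY: "l1 + l2 + l0' = S'" using dec C0 by (simp add: S'_def)
  have ex: "\<exists>m k r :: nat. m > 0 \<and> k > 0 \<and> r > 0 \<and> squarefree r \<and>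
        deg_ratio l0 l1 l2 = of_nat (m^2) / of_nat (r * k^2)"
  proof (intro exI conjI)
    show "S > 0" "A > 0" "C > 0" "squarefree C" using Apos Cpos sqC by simp_all
    show "deg_ratio l0 l1 l2 = of_nat (S^2) / of_nat (C * A^2)"
      using deg_ratio_eq2[of l0 l1 l2 C A S] lpos Apos Cpos prodX sumX by simp
  qed
  have all: "\<forall>m k r :: nat. m > 0 \<and> k > 0 \<and> r > 0 \<and> squarefree r \<and>
        deg_ratio l0 l1 l2 = of_nat (m^2) / of_nat (r * k^2) \<longrightarrow>
        m * a0 * a1 * a2 = k * (c0 * a0^2 + c1 * a1^2 + c2 * a2^2) \<and>
        m * a0' * a1 * a2 = k * (c0 * a0'^2 + c1 * a1^2 + c2 * a2^2)"
  proof (intro allI impI)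
    fix m k r :: nat
    assume H: "m > 0 \<and> k > 0 \<and> r > 0 \<and> squarefree r \<and> deg_ratio l0 l1 l2 = of_nat (m^2) / of_nat (r * k^2)"
    then have mkr: "m > 0" "k > 0" "r > 0" "squarefree r" and dr: "deg_ratio l0 l1 l2 = of_nat (m^2) / of_nat (r * k^2)"
      by simp_all
    have "(l0 + l1 + l2)^2 * (r * k^2) = m^2 * (l0 * l1 * l2)"
      using deg_ratio_eq2[of l0 l1 l2 r k m] lpos mkr dr by simp
    then have "S^2 * (r * k^2) = m^2 * (C * A^2)" by (simp only: prodX sumX)
    then have 1: "m * A = k * S" by (rule key_dioph[OF sqC mkr(4) Cpos mkr(3) mkr(2) Apos(1) Apos(3) mkr(1)])
    have "deg_ratio l1 l2 l0' = of_nat (m^2) / of_nat (r * k^2)" using DR dr by simp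
    then have "(l1 + l2 + l0')^2 * (r * k^2) = m^2 * (l1 * l2 * l0')"
      using deg_ratio_eq2[of l1 l2 l0' r k m] lpos l0'pos mkr by simp
    then have "S'^2 * (r * k^2) = m^2 * (C * A'^2)" by (simp only: prodY sumY)
    then have 2: "m * A' = k * S'" by (rule key_dioph[OF sqC mkr(4) Cpos mkr(3) mkr(2) Apos(2) Apos(4) mkr(1)])
    show "m * a0 * a1 * a2 = k * (c0 * a0^2 + c1 * a1^2 + c2 * a2^2) \<and>
        m * a0' * a1 * a2 = k * (c0 * a0'^2 + c1 * a1^2 + c2 * a2^2)"
      using 1 2 by (simp add: A_def A'_def S_def S'_def mult.assoc)
  qed
  show ?thesis using C0 DR ex all MULT by blast
qed


end
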